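(* Let $n,l\ge 1$, $\sigma_x>0$, $\sigma_\eta>0$, $\hat{\mu}\ge 0$. Let $x_{i,1},x_{i,2},\ldots\in\mathbb{R}^n$ and $\eta_{i,1},\eta_{i,2},\ldots\in\mathbb{R}^l$ be mutually independent Gaussian random vectors with $x_{i,j}\sim\mathcal{N}(\mu_{i,j},\sigma_x^2I_n)$ and $\eta_{i,j}\sim\mathcal{N}(0,\sigma_\eta^2 I_l)$, where the means $\mu_{i,j}\in\mathbb{R}^n$ are deterministic with $\|\mu_{i,j}\|\le\hat{\mu}$ for all $j$. Fix $\delta>0$ and let $t\ge t_3=2(n+l)\log\frac{1}{\delta}$. Then with probability at least $1-2\delta$, $$\Big\|\sum_{j=1}^t\eta_{i,j}x_{i,j}^*\Big\|\le\sqrt{t}\,\sigma_\eta\left(4\sigma_x\sqrt{(n+l)\log\tfrac{9}{\delta}}+\hat{\mu}\Big(\sqrt{2(l+n)}+\sqrt{2\log\tfrac{2}{\delta}}\Big)\right).$$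
   Context: $\|\cdot\|$ denotes the spectral norm and $A^*$ the (conjugate) transpose. $\mathcal{N}(\mu,\sigma^2 I)$ is the Gaussian distribution with mean $\mu$ and covariance $\sigma^2 I$. *)

theory Defs
  imports "HOL-Probability.Probability"
begin

definition iso_gauss_density :: "('n::finite) itself \<Rightarrow> real ^ 'n \<Rightarrow> real \<Rightarrow> real ^ 'n \<Rightarrow> real" where
  "iso_gauss_density _ mu s x =
     (1 / sqrt (2 * pi * s\<^sup>2)) ^ CARD('n) * exp (- (norm (x - mu))\<^sup>2 / (2 * s\<^sup>2))"

definition outer :: "real ^ 'l \<Rightarrow> real ^ 'n \<Rightarrow> real ^ 'n ^ 'l" where
  "outer e v = (\<chi> a b. e $ a * v $ b)"

definition spec_norm :: "real ^ 'n ^ 'l \<Rightarrow> real" where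
  "spec_norm A = onorm (\<lambda>v. A *v v)"

end

theory Submission
  imports Defs
begin

lemma DIM_vec_real: "DIM(real ^ 'n::finite) = CARD('n)" by simp

lemma iso_nonneg: "s > 0 \<Longrightarrow> 0 \<le> iso_gauss_density TYPE('n::finite) m s x"
  by (simp add: iso_gauss_density_def)

lemma iso_measurable[measurable]: "iso_gauss_density TYPE('n::finite) m s \<in> borel_measurable borel"
  unfolding iso_gauss_density_def[abs_def] by measurable

lemma iso_shift:
  "(\<integral>\<^sup>+x. ennreal (iso_gauss_density TYPE('n::finite) m s x) \<partial>lborel)
 = (\<integral>\<^sup>+x. ennreal (iso_gauss_density TYPE('n) 0 s x) \<partial>lborel)"
proof -
  have "(\<integral>\<^sup>+x. ennreal (iso_gauss_density TYPE('n) m s x) \<partial>lborel)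
     = (\<integral>\<^sup>+x. ennreal (iso_gauss_density TYPE('n) m s x) \<partial>(distr lborel borel ((+) m)))"
    by (simp add: lborel_distr_plus)
  also have "\<dots> = (\<integral>\<^sup>+x. ennreal (iso_gauss_density TYPE('n) m s (m + x)) \<partial>lborel)"
    by (subst nn_integral_distr) auto
  also have "\<dots> = (\<integral>\<^sup>+x. ennreal (iso_gauss_density TYPE('n) 0 s x) \<partial>lborel)"
    by (simp add: iso_gauss_density_def)
  finally show ?thesis .
qed

lemma iso_scale:
  assumes s: "s > 0" and s': "s' > 0"
  shows "(\<integral>\<^sup>+x. ennreal (iso_gauss_density TYPE('n::finite) 0 s' x) \<partial>lborel)
 = (\<integral>\<^sup>+x. ennreal (iso_gauss_density TYPE('n) 0 s x) \<partial>lborel)"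
proof -
  define c where "c = s' / s"
  have c: "c > 0" using s s' by (simp add: c_def)
  have "(\<integral>\<^sup>+x. ennreal (iso_gauss_density TYPE('n) 0 s' x) \<partial>lborel)
     = (\<integral>\<^sup>+x. ennreal (iso_gauss_density TYPE('n) 0 s' x) \<partial>density (distr lborel borel (\<lambda>x. 0 + c *\<^sub>R x)) (\<lambda>_. \<bar>c\<bar>^DIM(real^'n)))"
    using lborel_affine[of c "0::real^'n"] c by simp
  also have "\<dots> = (\<integral>\<^sup>+x. ennreal (c ^ CARD('n)) * ennreal (iso_gauss_density TYPE('n) 0 s' (c *\<^sub>R x)) \<partial>lborel)"
    using c by (subst nn_integral_density) (auto simp: nn_integral_distr)
  also have "\<dots> = (\<integral>\<^sup>+x. ennreal (iso_gauss_density TYPE('n) 0 s x) \<partial>lborel)"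
  proof (rule nn_integral_cong)
    fix x :: "real^'n"
    have "c ^ CARD('n) * iso_gauss_density TYPE('n) 0 s' (c *\<^sub>R x) = iso_gauss_density TYPE('n) 0 s x"
    proof -
      have h1: "c * (1 / sqrt (2 * pi * s'\<^sup>2)) = 1 / sqrt (2 * pi * s\<^sup>2)"
        using s s' by (simp add: c_def real_sqrt_mult)
      have h2: "(norm (c *\<^sub>R x))\<^sup>2 / (2 * s'\<^sup>2) = (norm x)\<^sup>2 / (2 * s\<^sup>2)"
        using s s' c by (simp add: c_def power_mult_distrib field_simps)
      have "c ^ CARD('n) * iso_gauss_density TYPE('n) 0 s' (c *\<^sub>R x)
          = (c * (1 / sqrt (2 * pi * s'\<^sup>2))) ^ CARD('n) * exp (- (norm (c *\<^sub>R x))\<^sup>2 / (2 * s'\<^sup>2))"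
        by (simp add: iso_gauss_density_def power_mult_distrib[symmetric])
      also have "\<dots> = iso_gauss_density TYPE('n) 0 s x"
      proof -
        have "- (norm (c *\<^sub>R x))\<^sup>2 / (2 * s'\<^sup>2) = - (norm x)\<^sup>2 / (2 * s\<^sup>2)"
          using h2 by (metis minus_divide_left)
        then show ?thesis unfolding h1 iso_gauss_density_def by simp
      qed
      finally show ?thesis .
    qed
    then show "ennreal (c ^ CARD('n)) * ennreal (iso_gauss_density TYPE('n) 0 s' (c *\<^sub>R x)) = ennreal (iso_gauss_density TYPE('n) 0 s x)"
      using c s' by (simp add: ennreal_mult'[symmetric] iso_nonneg)
  qed
  finally show ?thesis .
qed

lemma iso_int_one:
  assumes s0: "s0 > 0" and s: "s > 0"
    and one: "(\<integral>\<^sup>+x. ennreal (iso_gauss_density TYPE('n::finite) m0 s0 x) \<partial>lborel) = 1"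
  shows "(\<integral>\<^sup>+x. ennreal (iso_gauss_density TYPE('n) m s x) \<partial>lborel) = 1"
  using one iso_shift[of m s] iso_shift[of m0 s0] iso_scale[OF s0 s, where 'n='n] by simp

lemma exp_complete_square:
  fixes x m w :: "real ^ 'n::finite"
  assumes s: "s > 0"
  shows "- (norm (x - m))\<^sup>2 / (2 * s\<^sup>2) + inner w x
       = inner w m + s\<^sup>2 * (norm w)\<^sup>2 / 2 - (norm (x - (m + s\<^sup>2 *\<^sub>R w)))\<^sup>2 / (2 * s\<^sup>2)"
proof -
  define d where "d = x - m"
  have x: "x = m + d" by (simp add: d_def)
  have "(norm (x - (m + s\<^sup>2 *\<^sub>R w)))\<^sup>2 = (norm d)\<^sup>2 - 2 * s\<^sup>2 * inner w d + s\<^sup>2 * s\<^sup>2 * (norm w)\<^sup>2"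
    unfolding x by (simp add: power2_norm_eq_inner inner_diff_left inner_diff_right inner_commute algebra_simps)
  note eq = this
  show ?thesis
    apply (subst eq)
    using s by (simp add: x inner_add_right field_simps power2_eq_square)
qed

lemma iso_mgf_lin:
  assumes s: "s > 0"
    and one: "\<And>m. (\<integral>\<^sup>+x. ennreal (iso_gauss_density TYPE('n::finite) m s x) \<partial>lborel) = 1"
  shows "(\<integral>\<^sup>+x. ennreal (iso_gauss_density TYPE('n) m s x) * ennreal (exp (inner w x)) \<partial>lborel)
       = ennreal (exp (inner w m + s\<^sup>2 * (norm w)\<^sup>2 / 2))"
proof -
  have "\<And>x. ennreal (iso_gauss_density TYPE('n) m s x) * ennreal (exp (inner w x))
      = ennreal (exp (inner w m + s\<^sup>2 * (norm w)\<^sup>2 / 2)) * ennreal (iso_gauss_density TYPE('n) (m + s\<^sup>2 *\<^sub>R w) s x)"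
  proof -
    fix x :: "real^'n"
    have "iso_gauss_density TYPE('n) m s x * exp (inner w x)
      = exp (inner w m + s\<^sup>2 * (norm w)\<^sup>2 / 2) * iso_gauss_density TYPE('n) (m + s\<^sup>2 *\<^sub>R w) s x"
      unfolding iso_gauss_density_def
      using exp_complete_square[OF s, of x m w]
      by (simp add: mult.assoc mult.left_commute exp_add[symmetric])
    then show "?thesis x" using s
      by (simp add: ennreal_mult'[symmetric] iso_nonneg)
  qed
  then have "(\<integral>\<^sup>+x. ennreal (iso_gauss_density TYPE('n) m s x) * ennreal (exp (inner w x)) \<partial>lborel)
     = (\<integral>\<^sup>+x. ennreal (exp (inner w m + s\<^sup>2 * (norm w)\<^sup>2 / 2)) * ennreal (iso_gauss_density TYPE('n) (m + s\<^sup>2 *\<^sub>R w) s x) \<partial>lborel)"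
    by simp
  also have "\<dots> = ennreal (exp (inner w m + s\<^sup>2 * (norm w)\<^sup>2 / 2)) * (\<integral>\<^sup>+x. ennreal (iso_gauss_density TYPE('n) (m + s\<^sup>2 *\<^sub>R w) s x) \<partial>lborel)"
    by (rule nn_integral_cmult) measurable
  finally show ?thesis using one by simp
qed

lemma iso_mgf_quad:
  assumes s: "s > 0" and g: "2 * g * s\<^sup>2 < 1"
    and one: "(\<integral>\<^sup>+x. ennreal (iso_gauss_density TYPE('n::finite) 0 s x) \<partial>lborel) = 1"
  shows "(\<integral>\<^sup>+x. ennreal (iso_gauss_density TYPE('n) 0 s x) * ennreal (exp (g * (norm x)\<^sup>2)) \<partial>lborel)
       = ennreal ((1 / sqrt (1 - 2 * g * s\<^sup>2)) ^ CARD('n))"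
proof -
  define q where "q = sqrt (1 - 2 * g * s\<^sup>2)"
  have q: "q > 0" using g by (simp add: q_def)
  have q2: "q\<^sup>2 = 1 - 2 * g * s\<^sup>2" using g by (simp add: q_def)
  define s' where "s' = s / q"
  have s': "s' > 0" using s q by (simp add: s'_def)
  have pt: "\<And>x. ennreal (iso_gauss_density TYPE('n) 0 s x) * ennreal (exp (g * (norm x)\<^sup>2))
      = ennreal ((1 / q) ^ CARD('n)) * ennreal (iso_gauss_density TYPE('n) 0 s' x)"
  proof -
    fix x :: "real^'n"
    have "- (norm x)\<^sup>2 / (2 * s'\<^sup>2) = - (norm x)\<^sup>2 * q\<^sup>2 / (2 * s\<^sup>2)"
      using s q by (simp add: s'_def field_simps)
    also have "\<dots> = - (norm x)\<^sup>2 / (2 * s\<^sup>2) + g * (norm x)\<^sup>2"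
      unfolding q2 using s by (simp add: field_simps)
    finally have e: "- (norm x)\<^sup>2 / (2 * s\<^sup>2) + g * (norm x)\<^sup>2 = - (norm x)\<^sup>2 / (2 * s'\<^sup>2)" by simp
    have c: "1 / sqrt (2 * pi * s\<^sup>2) = (1/q) * (1 / sqrt (2 * pi * s'\<^sup>2))"
      using s q by (simp add: s'_def real_sqrt_mult real_sqrt_divide field_simps)
    have "iso_gauss_density TYPE('n) 0 s x * exp (g * (norm x)\<^sup>2)
       = (1 / q) ^ CARD('n) * iso_gauss_density TYPE('n) 0 s' x"
      unfolding iso_gauss_density_def c power_mult_distrib
      using e by (simp add: exp_add[symmetric] mult.assoc)
    then show "?thesis x" using s q s'
      by (simp add: ennreal_mult'[symmetric] iso_nonneg)
  qed
  have "(\<integral>\<^sup>+x. ennreal (iso_gauss_density TYPE('n) 0 s x) * ennreal (exp (g * (norm x)\<^sup>2)) \<partial>lborel)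
      = ennreal ((1 / q) ^ CARD('n)) * (\<integral>\<^sup>+x. ennreal (iso_gauss_density TYPE('n) 0 s' x) \<partial>lborel)"
    unfolding pt by (rule nn_integral_cmult) measurable
  also have "(\<integral>\<^sup>+x. ennreal (iso_gauss_density TYPE('n) 0 s' x) \<partial>lborel) = 1"
    using iso_int_one[OF s s' one] .
  finally show ?thesis by (simp add: q_def)
qed

lemma std_normal_one: "s > 0 \<Longrightarrow> (\<integral>\<^sup>+x. ennreal (normal_density m s x) \<partial>lborel) = 1"
proof -
  assume "s > 0"
  interpret prob_space "density lborel (\<lambda>x. ennreal (normal_density m s x))"
    using \<open>s > 0\<close> by (rule prob_space_normal_density)
  show ?thesis using emeasure_space_1 by (simp add: emeasure_density)
qed

lemma std_normal_mgf_lin: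
  "(\<integral>\<^sup>+x. ennreal (std_normal_density x) * ennreal (exp (b * x)) \<partial>lborel) = ennreal (exp (b\<^sup>2 / 2))"
proof -
  have pt: "\<And>x. ennreal (std_normal_density x) * ennreal (exp (b * x)) = ennreal (exp (b\<^sup>2 / 2)) * ennreal (normal_density b 1 x)"
  proof -
    fix x :: real
    have "std_normal_density x * exp (b * x) = exp (b\<^sup>2 / 2) * normal_density b 1 x"
      unfolding normal_density_def
      by (simp add: exp_add[symmetric] mult.assoc mult.left_commute power2_eq_square field_simps)
    then show "?thesis x" by (simp add: ennreal_mult'[symmetric])
  qed
  have "(\<integral>\<^sup>+x. ennreal (std_normal_density x) * ennreal (exp (b * x)) \<partial>lborel)
      = ennreal (exp (b\<^sup>2 / 2)) * (\<integral>\<^sup>+x. ennreal (normal_density b 1 x) \<partial>lborel)"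
    unfolding pt by (rule nn_integral_cmult) measurable
  then show ?thesis by (simp add: std_normal_one)
qed

lemma std_normal_mgf_quad:
  assumes g: "2 * g < 1"
  shows "(\<integral>\<^sup>+x. ennreal (std_normal_density x) * ennreal (exp (g * x\<^sup>2)) \<partial>lborel) = ennreal (1 / sqrt (1 - 2 * g))"
proof -
  define q where "q = sqrt (1 - 2 * g)"
  have q: "q > 0" using g by (simp add: q_def)
  have q2: "q\<^sup>2 = 1 - 2 * g" using g by (simp add: q_def)
  have pt: "\<And>x. ennreal (std_normal_density x) * ennreal (exp (g * x\<^sup>2)) = ennreal (1 / q) * ennreal (normal_density 0 (1/q) x)"
  proof -
    fix x :: real
    have "- x\<^sup>2 / (2 * (1/q)\<^sup>2) = - x\<^sup>2 * q\<^sup>2 / 2" using q by (simp add: field_simps)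
    also have "\<dots> = - x\<^sup>2 / 2 + g * x\<^sup>2" unfolding q2 by (simp add: field_simps)
    finally have e: "- x\<^sup>2 / 2 + g * x\<^sup>2 = - x\<^sup>2 / (2 * (1/q)\<^sup>2)" by simp
    have "std_normal_density x * exp (g * x\<^sup>2) = (1 / q) * normal_density 0 (1/q) x"
      unfolding normal_density_def using q e
      by (simp add: exp_add[symmetric] real_sqrt_mult real_sqrt_divide field_simps)
    then show "?thesis x" using q by (simp add: ennreal_mult'[symmetric])
  qed
  have "(\<integral>\<^sup>+x. ennreal (std_normal_density x) * ennreal (exp (g * x\<^sup>2)) \<partial>lborel)
      = ennreal (1 / q) * (\<integral>\<^sup>+x. ennreal (normal_density 0 (1/q) x) \<partial>lborel)"
    unfolding pt by (rule nn_integral_cmult) measurable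
  then show ?thesis using q by (simp add: std_normal_one q_def)
qed

lemma quad_dir_mgf:
  fixes u :: "real ^ 'l::finite"
  assumes s: "s > 0" and u: "norm u = 1" and k: "k \<ge> 0" and k2: "2 * k * s\<^sup>2 < 1"
    and one: "\<And>m. (\<integral>\<^sup>+x. ennreal (iso_gauss_density TYPE('l) m s x) \<partial>lborel) = 1"
  shows "(\<integral>\<^sup>+e. ennreal (iso_gauss_density TYPE('l) 0 s e) * ennreal (exp (k * (inner u e)\<^sup>2)) \<partial>lborel)
       = ennreal (1 / sqrt (1 - 2 * k * s\<^sup>2))"
proof -
  define b where "b = sqrt (2 * k)"
  have b2: "b\<^sup>2 = 2 * k" using k by (simp add: b_def)
  have "(\<integral>\<^sup>+e. ennreal (iso_gauss_density TYPE('l) 0 s e) * ennreal (exp (k * (inner u e)\<^sup>2)) \<partial>lborel)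
      = (\<integral>\<^sup>+e. ennreal (iso_gauss_density TYPE('l) 0 s e) *
            (\<integral>\<^sup>+r. ennreal (std_normal_density r) * ennreal (exp ((b * inner u e) * r)) \<partial>lborel) \<partial>lborel)"
  proof (rule nn_integral_cong)
    fix e :: "real^'l"
    have "exp (k * (inner u e)\<^sup>2) = exp ((b * inner u e)\<^sup>2 / 2)"
      by (simp add: power_mult_distrib b2)
    then show "ennreal (iso_gauss_density TYPE('l) 0 s e) * ennreal (exp (k * (inner u e)\<^sup>2)) =
      ennreal (iso_gauss_density TYPE('l) 0 s e) *
            (\<integral>\<^sup>+r. ennreal (std_normal_density r) * ennreal (exp ((b * inner u e) * r)) \<partial>lborel)"
      by (simp only: std_normal_mgf_lin)
  qed
  also have "\<dots> = (\<integral>\<^sup>+e. (\<integral>\<^sup>+r. ennreal (iso_gauss_density TYPE('l) 0 s e) * (ennreal (std_normal_density r) * ennreal (exp ((b * inner u e) * r))) \<partial>lborel) \<partial>lborel)"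
    by (subst nn_integral_cmult[symmetric]) (auto intro!: nn_integral_cong)
  also have "\<dots> = (\<integral>\<^sup>+r. (\<integral>\<^sup>+e. ennreal (iso_gauss_density TYPE('l) 0 s e) * (ennreal (std_normal_density r) * ennreal (exp ((b * inner u e) * r))) \<partial>lborel) \<partial>lborel)"
    by (rule lborel_pair.Fubini'[symmetric]) measurable
  also have "\<dots> = (\<integral>\<^sup>+r. ennreal (std_normal_density r) * (\<integral>\<^sup>+e. ennreal (iso_gauss_density TYPE('l) 0 s e) * ennreal (exp (inner ((b * r) *\<^sub>R u) e)) \<partial>lborel) \<partial>lborel)"
    by (subst nn_integral_cmult[symmetric]) (auto intro!: nn_integral_cong simp: ac_simps)
  also have "\<dots> = (\<integral>\<^sup>+r. ennreal (std_normal_density r) * ennreal (exp ((k * s\<^sup>2) * r\<^sup>2)) \<partial>lborel)"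
  proof (rule nn_integral_cong)
    fix r :: real
    have "s\<^sup>2 * (norm ((b * r) *\<^sub>R u))\<^sup>2 / 2 = (k * s\<^sup>2) * r\<^sup>2"
      using u by (simp add: power_mult_distrib b2)
    show "ennreal (std_normal_density r) * (\<integral>\<^sup>+e. ennreal (iso_gauss_density TYPE('l) 0 s e) * ennreal (exp (inner ((b * r) *\<^sub>R u) e)) \<partial>lborel)
      = ennreal (std_normal_density r) * ennreal (exp ((k * s\<^sup>2) * r\<^sup>2))"
      using iso_mgf_lin[OF s one, of 0 "(b * r) *\<^sub>R u"] unfolding inner_zero_right add_0_left \<open>s\<^sup>2 * (norm ((b * r) *\<^sub>R u))\<^sup>2 / 2 = (k * s\<^sup>2) * r\<^sup>2\<close>
      by simp
  qed
  also have "\<dots> = ennreal (1 / sqrt (1 - 2 * (k * s\<^sup>2)))"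
    by (rule std_normal_mgf_quad) (use k2 in simp)
  finally show ?thesis by (simp add: mult.assoc)
qed

lemma (in prob_space) distr_density_one:
  assumes "distributed M lborel X (\<lambda>v. ennreal (f v))"
  shows "(\<integral>\<^sup>+v. ennreal (f v) \<partial>lborel) = 1"
proof -
  have X: "X \<in> measurable M lborel" using assms by (rule distributed_measurable)
  have "emeasure M (X -` UNIV \<inter> space M) = (\<integral>\<^sup>+x. ennreal (f x) * indicator UNIV x \<partial>lborel)"
    using distributed_emeasure[OF assms, of UNIV] by simp
  then show ?thesis using emeasure_space_1 by simp
qed

lemma (in prob_space) indep_grouped:
  fixes x :: "nat \<Rightarrow> 'a \<Rightarrow> real ^ 'n::finite" and eta :: "nat \<Rightarrow> 'a \<Rightarrow> real ^ 'l::finite"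
  assumes ind: "indep_vars (\<lambda>_. borel)
           (\<lambda>i \<omega>. case i of Inl j \<Rightarrow> (x j \<omega>, 0) | Inr j \<Rightarrow> (0, eta j \<omega>)) (UNIV :: (nat + nat) set)"
    and G: "\<And>j. j \<in> J \<Longrightarrow> G j \<in> borel_measurable borel"
  shows "indep_vars (\<lambda>_. borel) (\<lambda>j \<omega>. G j (x j \<omega>, eta j \<omega>)) J"
proof -
  let ?X = "\<lambda>i \<omega>. case i of Inl j \<Rightarrow> (x j \<omega>, 0) | Inr j \<Rightarrow> (0, eta j \<omega>)"
  have r: "indep_vars (\<lambda>j. PiM {Inl j, Inr j} (\<lambda>_. borel)) (\<lambda>j \<omega>. restrict (\<lambda>i. ?X i \<omega>) {Inl j, Inr j}) J"
    by (rule indep_vars_restrict[OF ind]) (auto simp: disjoint_family_on_def)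
  have "indep_vars (\<lambda>_. borel) (\<lambda>j \<omega>. (\<lambda>f. G j (f (Inl j) + f (Inr j))) (restrict (\<lambda>i. ?X i \<omega>) {Inl j, Inr j})) J"
  proof (rule indep_vars_compose2[OF r])
    fix j assume j: "j \<in> J"
    note G[OF j, measurable]
    have [measurable]: "(\<lambda>f. f (Inl j)) \<in> measurable (PiM {Inl j, Inr j} (\<lambda>_. borel)) (borel :: ((real^'n) \<times> (real^'l)) measure)"
      by (rule measurable_component_singleton) simp
    have [measurable]: "(\<lambda>f. f (Inr j)) \<in> measurable (PiM {Inl j, Inr j} (\<lambda>_. borel)) (borel :: ((real^'n) \<times> (real^'l)) measure)"
      by (rule measurable_component_singleton) simp
    show "(\<lambda>f. G j (f (Inl j) + f (Inr j))) \<in> measurable (PiM {Inl j, Inr j} (\<lambda>_. borel)) borel"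
      by measurable
  qed
  then show ?thesis
    by (rule indep_vars_cong[THEN iffD1, rotated 3]) auto
qed

lemma (in prob_space) indep_expect:
  fixes x :: "nat \<Rightarrow> 'a \<Rightarrow> real ^ 'n::finite" and eta :: "nat \<Rightarrow> 'a \<Rightarrow> real ^ 'l::finite"
    and F :: "(real ^ 'n) \<times> (real ^ 'l) \<Rightarrow> ennreal"
  assumes ind: "indep_vars (\<lambda>_. borel)
           (\<lambda>i \<omega>. case i of Inl j \<Rightarrow> (x j \<omega>, 0) | Inr j \<Rightarrow> (0, eta j \<omega>)) (UNIV :: (nat + nat) set)"
    and F[measurable]: "F \<in> borel_measurable borel"
  shows "(\<integral>\<^sup>+\<omega>. F (x j \<omega>, eta j \<omega>) \<partial>M) = (\<integral>\<^sup>+\<omega>1. (\<integral>\<^sup>+\<omega>2. F (x j \<omega>1, eta j \<omega>2) \<partial>M) \<partial>M)"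
proof -
  let ?X = "\<lambda>i \<omega>. case i of Inl j \<Rightarrow> (x j \<omega>, 0) | Inr j \<Rightarrow> (0, eta j \<omega>)"
  define X1 where "X1 = (\<lambda>\<omega>. (x j \<omega>, 0::real^'l))"
  define X2 where "X2 = (\<lambda>\<omega>. (0::real^'n, eta j \<omega>))"
  have r: "indep_var (PiM {Inl j} (\<lambda>_. borel)) (\<lambda>\<omega>. restrict (\<lambda>i. ?X i \<omega>) {Inl j})
                     (PiM {Inr j} (\<lambda>_. borel)) (\<lambda>\<omega>. restrict (\<lambda>i. ?X i \<omega>) {Inr j})"
    by (rule indep_var_restrict[OF ind]) auto
  have m1: "(\<lambda>f. f (Inl j)) \<in> measurable (PiM {Inl j} (\<lambda>_. borel)) (borel :: ((real^'n) \<times> (real^'l)) measure)"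
      by (rule measurable_component_singleton) simp
  have m2: "(\<lambda>f. f (Inr j)) \<in> measurable (PiM {Inr j} (\<lambda>_. borel)) (borel :: ((real^'n) \<times> (real^'l)) measure)"
      by (rule measurable_component_singleton) simp
  have "indep_var borel ((\<lambda>f. f (Inl j)) \<circ> (\<lambda>\<omega>. restrict (\<lambda>i. ?X i \<omega>) {Inl j}))
                  borel ((\<lambda>f. f (Inr j)) \<circ> (\<lambda>\<omega>. restrict (\<lambda>i. ?X i \<omega>) {Inr j}))"
    by (rule indep_var_compose[OF r m1 m2])
  moreover have "((\<lambda>f. f (Inl j)) \<circ> (\<lambda>\<omega>. restrict (\<lambda>i. ?X i \<omega>) {Inl j})) = X1"
    by (auto simp: fun_eq_iff X1_def)
  moreover have "((\<lambda>f. f (Inr j)) \<circ> (\<lambda>\<omega>. restrict (\<lambda>i. ?X i \<omega>) {Inr j})) = X2"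
    by (auto simp: fun_eq_iff X2_def)
  ultimately have iv: "indep_var borel X1 borel X2" by simp
  then have rv1[measurable]: "X1 \<in> borel_measurable M" and rv2[measurable]: "X2 \<in> borel_measurable M"
    and jd: "distr M borel X1 \<Otimes>\<^sub>M distr M borel X2 = distr M (borel \<Otimes>\<^sub>M borel) (\<lambda>\<omega>. (X1 \<omega>, X2 \<omega>))"
    unfolding indep_var_distribution_eq by auto
  interpret D2: prob_space "distr M borel X2" by (rule prob_space_distr) simp
  define H where "H = (\<lambda>(p :: (real^'n) \<times> (real^'l), q :: (real^'n) \<times> (real^'l)). F (fst p, snd q))"
  have F'[measurable]: "F \<in> borel_measurable (borel \<Otimes>\<^sub>M borel)"
    using F by (simp add: borel_prod)
  have bf[measurable]: "(fst :: (real^'n) \<times> (real^'l) \<Rightarrow> _) \<in> borel_measurable borel"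
    by (intro borel_measurable_continuous_onI continuous_intros)
  have bs[measurable]: "(snd :: (real^'n) \<times> (real^'l) \<Rightarrow> _) \<in> borel_measurable borel"
    by (intro borel_measurable_continuous_onI continuous_intros)
  have H[measurable]: "H \<in> borel_measurable (borel \<Otimes>\<^sub>M borel)"
    unfolding H_def by measurable
  have "(\<integral>\<^sup>+\<omega>. F (x j \<omega>, eta j \<omega>) \<partial>M) = (\<integral>\<^sup>+\<omega>. H (X1 \<omega>, X2 \<omega>) \<partial>M)"
    by (simp add: H_def X1_def X2_def)
  also have "\<dots> = (\<integral>\<^sup>+z. H z \<partial>distr M (borel \<Otimes>\<^sub>M borel) (\<lambda>\<omega>. (X1 \<omega>, X2 \<omega>)))"
    by (subst nn_integral_distr) auto
  also have "\<dots> = (\<integral>\<^sup>+z. H z \<partial>(distr M borel X1 \<Otimes>\<^sub>M distr M borel X2))"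
    by (simp add: jd)
  also have "\<dots> = (\<integral>\<^sup>+p. (\<integral>\<^sup>+q. H (p, q) \<partial>distr M borel X2) \<partial>distr M borel X1)"
    by (rule D2.nn_integral_fst[symmetric]) simp
  also have "\<dots> = (\<integral>\<^sup>+\<omega>1. (\<integral>\<^sup>+q. H (X1 \<omega>1, q) \<partial>distr M borel X2) \<partial>M)"
    by (subst nn_integral_distr) auto
  also have "\<dots> = (\<integral>\<^sup>+\<omega>1. (\<integral>\<^sup>+\<omega>2. H (X1 \<omega>1, X2 \<omega>2) \<partial>M) \<partial>M)"
    by (subst nn_integral_distr) auto
  also have "\<dots> = (\<integral>\<^sup>+\<omega>1. (\<integral>\<^sup>+\<omega>2. F (x j \<omega>1, eta j \<omega>2) \<partial>M) \<partial>M)"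
    by (simp add: H_def X1_def X2_def)
  finally show ?thesis .
qed

lemma iso_shift_fun:
  fixes h :: "real ^ 'n::finite \<Rightarrow> ennreal"
  assumes [measurable]: "h \<in> borel_measurable borel"
  shows "(\<integral>\<^sup>+a. ennreal (iso_gauss_density TYPE('n) m s a) * h (a - m) \<partial>lborel)
       = (\<integral>\<^sup>+a. ennreal (iso_gauss_density TYPE('n) 0 s a) * h a \<partial>lborel)"
proof -
  have "(\<integral>\<^sup>+a. ennreal (iso_gauss_density TYPE('n) m s a) * h (a - m) \<partial>lborel)
     = (\<integral>\<^sup>+a. ennreal (iso_gauss_density TYPE('n) m s a) * h (a - m) \<partial>(distr lborel borel ((+) m)))"
    by (simp add: lborel_distr_plus)
  also have "\<dots> = (\<integral>\<^sup>+a. ennreal (iso_gauss_density TYPE('n) m s (m + a)) * h (m + a - m) \<partial>lborel)"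
    by (subst nn_integral_distr) auto
  also have "\<dots> = (\<integral>\<^sup>+a. ennreal (iso_gauss_density TYPE('n) 0 s a) * h a \<partial>lborel)"
    by (simp add: iso_gauss_density_def)
  finally show ?thesis .
qed

lemma (in prob_space) mgf_pair:
  fixes x :: "nat \<Rightarrow> 'a \<Rightarrow> real ^ 'n::finite" and eta :: "nat \<Rightarrow> 'a \<Rightarrow> real ^ 'l::finite"
  assumes ind: "indep_vars (\<lambda>_. borel)
           (\<lambda>i \<omega>. case i of Inl j \<Rightarrow> (x j \<omega>, 0) | Inr j \<Rightarrow> (0, eta j \<omega>)) (UNIV :: (nat + nat) set)"
    and dx: "distributed M lborel (x j) (\<lambda>v. ennreal (iso_gauss_density TYPE('n) m sx v))"
    and de: "distributed M lborel (eta j) (\<lambda>v. ennreal (iso_gauss_density TYPE('l) 0 se v))"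
    and sx: "sx > 0" and se: "se > 0" and u: "norm u = 1" and v: "norm v = 1"
    and lam: "lam\<^sup>2 * sx\<^sup>2 * se\<^sup>2 < 1"
  shows "(\<integral>\<^sup>+\<omega>. ennreal (exp (lam * (inner u (eta j \<omega>) * inner v (x j \<omega> - m)))) \<partial>M)
       = ennreal (1 / sqrt (1 - lam\<^sup>2 * sx\<^sup>2 * se\<^sup>2))"
proof -
  have onex: "\<And>m'. (\<integral>\<^sup>+x. ennreal (iso_gauss_density TYPE('n) m' sx x) \<partial>lborel) = 1"
    using iso_int_one[OF sx sx distr_density_one[OF dx]] .
  have onee: "\<And>m'. (\<integral>\<^sup>+x. ennreal (iso_gauss_density TYPE('l) m' se x) \<partial>lborel) = 1"
    using iso_int_one[OF se se distr_density_one[OF de]] .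
  have [measurable]: "x j \<in> borel_measurable M" using distributed_measurable[OF dx] by simp
  have [measurable]: "eta j \<in> borel_measurable M" using distributed_measurable[OF de] by simp
  have "(\<integral>\<^sup>+\<omega>. ennreal (exp (lam * (inner u (eta j \<omega>) * inner v (x j \<omega> - m)))) \<partial>M)
     = (\<integral>\<^sup>+\<omega>1. (\<integral>\<^sup>+\<omega>2. ennreal (exp (lam * (inner u (eta j \<omega>2) * inner v (x j \<omega>1 - m)))) \<partial>M) \<partial>M)"
  proof -
    have c: "(\<lambda>p::(real^'n) \<times> (real^'l). exp (lam * (inner u (snd p) * inner v (fst p - m)))) \<in> borel_measurable borel"
      by (intro borel_measurable_continuous_onI continuous_intros)
    show ?thesis
      using indep_expect[OF ind, of "\<lambda>p. ennreal (exp (lam * (inner u (snd p) * inner v (fst p - m))))" j] c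
      by simp
  qed
  also have "\<dots> = (\<integral>\<^sup>+\<omega>1. ennreal (exp ((se\<^sup>2 * lam\<^sup>2 / 2) * (inner v (x j \<omega>1 - m))\<^sup>2)) \<partial>M)"
  proof (rule nn_integral_cong)
    fix \<omega>1
    let ?c = "lam * inner v (x j \<omega>1 - m)"
    have "(\<integral>\<^sup>+\<omega>2. ennreal (exp (lam * (inner u (eta j \<omega>2) * inner v (x j \<omega>1 - m)))) \<partial>M)
        = (\<integral>\<^sup>+e. ennreal (iso_gauss_density TYPE('l) 0 se e) * ennreal (exp (inner (?c *\<^sub>R u) e)) \<partial>lborel)"
      by (subst distributed_nn_integral[OF de, symmetric]) (auto simp: ac_simps)
    also have "\<dots> = ennreal (exp (se\<^sup>2 * (norm (?c *\<^sub>R u))\<^sup>2 / 2))"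
      using iso_mgf_lin[OF se onee, of 0 "?c *\<^sub>R u"] by simp
    also have "se\<^sup>2 * (norm (?c *\<^sub>R u))\<^sup>2 / 2 = (se\<^sup>2 * lam\<^sup>2 / 2) * (inner v (x j \<omega>1 - m))\<^sup>2"
      using u by (simp add: power_mult_distrib)
    finally show "(\<integral>\<^sup>+\<omega>2. ennreal (exp (lam * (inner u (eta j \<omega>2) * inner v (x j \<omega>1 - m)))) \<partial>M)
        = ennreal (exp ((se\<^sup>2 * lam\<^sup>2 / 2) * (inner v (x j \<omega>1 - m))\<^sup>2))" .
  qed
  also have "\<dots> = (\<integral>\<^sup>+a. ennreal (iso_gauss_density TYPE('n) m sx a) * ennreal (exp ((se\<^sup>2 * lam\<^sup>2 / 2) * (inner v (a - m))\<^sup>2)) \<partial>lborel)"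
    by (subst distributed_nn_integral[OF dx, symmetric]) auto
  also have "\<dots> = (\<integral>\<^sup>+a. ennreal (iso_gauss_density TYPE('n) 0 sx a) * ennreal (exp ((se\<^sup>2 * lam\<^sup>2 / 2) * (inner v a)\<^sup>2)) \<partial>lborel)"
    by (rule iso_shift_fun[where h = "\<lambda>a. ennreal (exp ((se\<^sup>2 * lam\<^sup>2 / 2) * (inner v a)\<^sup>2))"]) measurable
  also have "\<dots> = ennreal (1 / sqrt (1 - 2 * (se\<^sup>2 * lam\<^sup>2 / 2) * sx\<^sup>2))"
    by (rule quad_dir_mgf[OF sx v _ _ onex]) (use lam in \<open>auto simp: ac_simps\<close>)
  finally show ?thesis by (simp add: ac_simps)
qed

lemma (in prob_space) chernoff_nn:
  assumes Z[measurable]: "Z \<in> borel_measurable M" and lam: "lam \<ge> 0"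
  shows "emeasure M {\<omega>\<in>space M. Z \<omega> \<ge> s} \<le> ennreal (exp (- lam * s)) * (\<integral>\<^sup>+\<omega>. ennreal (exp (lam * Z \<omega>)) \<partial>M)"
proof -
  have "emeasure M {\<omega>\<in>space M. Z \<omega> \<ge> s} = (\<integral>\<^sup>+\<omega>. indicator {\<omega>\<in>space M. Z \<omega> \<ge> s} \<omega> \<partial>M)"
    by simp
  also have "\<dots> \<le> (\<integral>\<^sup>+\<omega>. ennreal (exp (- lam * s)) * ennreal (exp (lam * Z \<omega>)) \<partial>M)"
  proof (rule nn_integral_mono)
    fix \<omega> assume "\<omega> \<in> space M"
    show "indicator {\<omega> \<in> space M. s \<le> Z \<omega>} \<omega> \<le> ennreal (exp (- lam * s)) * ennreal (exp (lam * Z \<omega>))"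
    proof (cases "s \<le> Z \<omega>")
      case True
      have "1 \<le> exp (- lam * s) * exp (lam * Z \<omega>)"
        using True lam by (simp add: exp_add[symmetric] algebra_simps mult_left_mono)
      then show ?thesis using True \<open>\<omega> \<in> space M\<close> by (simp add: ennreal_mult'[symmetric])
    qed simp
  qed
  also have "\<dots> = ennreal (exp (- lam * s)) * (\<integral>\<^sup>+\<omega>. ennreal (exp (lam * Z \<omega>)) \<partial>M)"
    by (rule nn_integral_cmult) measurable
  finally show ?thesis .
qed

lemma (in prob_space) tail_alpha:
  fixes x :: "nat \<Rightarrow> 'a \<Rightarrow> real ^ 'n::finite" and eta :: "nat \<Rightarrow> 'a \<Rightarrow> real ^ 'l::finite"
  assumes ind: "indep_vars (\<lambda>_. borel)
           (\<lambda>i \<omega>. case i of Inl j \<Rightarrow> (x j \<omega>, 0) | Inr j \<Rightarrow> (0, eta j \<omega>)) (UNIV :: (nat + nat) set)"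
    and dx: "\<And>j. distributed M lborel (x j) (\<lambda>v. ennreal (iso_gauss_density TYPE('n) (mu j) sx v))"
    and de: "\<And>j. distributed M lborel (eta j) (\<lambda>v. ennreal (iso_gauss_density TYPE('l) 0 se v))"
    and sx: "sx > 0" and se: "se > 0" and u: "norm u = 1" and v: "norm v = 1"
    and lam0: "lam \<ge> 0" and lam: "lam\<^sup>2 * sx\<^sup>2 * se\<^sup>2 < 1" and fin: "finite J"
  shows "emeasure M {\<omega>\<in>space M. (\<Sum>j\<in>J. inner u (eta j \<omega>) * inner v (x j \<omega> - mu j)) \<ge> s}
     \<le> ennreal (exp (- lam * s) * (1 / sqrt (1 - lam\<^sup>2 * sx\<^sup>2 * se\<^sup>2)) ^ card J)"
proof -
  have [measurable]: "\<And>j. x j \<in> borel_measurable M" using distributed_measurable[OF dx] by simp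
  have [measurable]: "\<And>j. eta j \<in> borel_measurable M" using distributed_measurable[OF de] by simp
  let ?G = "\<lambda>j (p::(real^'n) \<times> (real^'l)). ennreal (exp (lam * (inner u (snd p) * inner v (fst p - mu j))))"
  have Gm: "\<And>j. ?G j \<in> borel_measurable borel"
  proof -
    fix j
    have "(\<lambda>p::(real^'n) \<times> (real^'l). exp (lam * (inner u (snd p) * inner v (fst p - mu j)))) \<in> borel_measurable borel"
      by (intro borel_measurable_continuous_onI continuous_intros)
    then show "?G j \<in> borel_measurable borel" by simp
  qed
  have iv: "indep_vars (\<lambda>_. borel) (\<lambda>j \<omega>. ?G j (x j \<omega>, eta j \<omega>)) J"
    by (rule indep_grouped[OF ind Gm])
  have "emeasure M {\<omega>\<in>space M. (\<Sum>j\<in>J. inner u (eta j \<omega>) * inner v (x j \<omega> - mu j)) \<ge> s}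
     \<le> ennreal (exp (- lam * s)) * (\<integral>\<^sup>+\<omega>. ennreal (exp (lam * (\<Sum>j\<in>J. inner u (eta j \<omega>) * inner v (x j \<omega> - mu j)))) \<partial>M)"
    by (rule chernoff_nn[OF _ lam0]) measurable
  also have "(\<integral>\<^sup>+\<omega>. ennreal (exp (lam * (\<Sum>j\<in>J. inner u (eta j \<omega>) * inner v (x j \<omega> - mu j)))) \<partial>M)
      = (\<integral>\<^sup>+\<omega>. (\<Prod>j\<in>J. ?G j (x j \<omega>, eta j \<omega>)) \<partial>M)"
    using fin by (simp add: sum_distrib_left exp_sum prod_ennreal)
  also have "\<dots> = (\<Prod>j\<in>J. \<integral>\<^sup>+\<omega>. ?G j (x j \<omega>, eta j \<omega>) \<partial>M)"
    by (rule indep_vars_nn_integral[OF fin iv]) simp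
  also have "\<dots> = (\<Prod>j\<in>J. ennreal (1 / sqrt (1 - lam\<^sup>2 * sx\<^sup>2 * se\<^sup>2)))"
    using mgf_pair[OF ind dx de sx se u v lam] by simp
  also have "ennreal (exp (- lam * s)) * \<dots> = ennreal (exp (- lam * s) * (1 / sqrt (1 - lam\<^sup>2 * sx\<^sup>2 * se\<^sup>2)) ^ card J)"
    using lam by (simp add: prod_ennreal ennreal_mult' ennreal_power)
  finally show ?thesis .
qed

lemma (in prob_space) mgf_Y:
  fixes x :: "nat \<Rightarrow> 'a \<Rightarrow> real ^ 'n::finite" and eta :: "nat \<Rightarrow> 'a \<Rightarrow> real ^ 'l::finite"
  assumes ind: "indep_vars (\<lambda>_. borel)
           (\<lambda>i \<omega>. case i of Inl j \<Rightarrow> (x j \<omega>, 0) | Inr j \<Rightarrow> (0, eta j \<omega>)) (UNIV :: (nat + nat) set)"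
    and de: "\<And>j. distributed M lborel (eta j) (\<lambda>v. ennreal (iso_gauss_density TYPE('l) 0 se v))"
    and se: "se > 0" and fin: "finite J" and k: "k \<ge> 0"
    and kC: "2 * k * se\<^sup>2 * (\<Sum>j\<in>J. (c j)\<^sup>2) < 1"
  shows "(\<integral>\<^sup>+\<omega>. ennreal (exp (k * (norm (\<Sum>j\<in>J. c j *\<^sub>R eta j \<omega>))\<^sup>2)) \<partial>M)
       = ennreal ((1 / sqrt (1 - 2 * (k * (\<Sum>j\<in>J. (c j)\<^sup>2)) * se\<^sup>2)) ^ CARD('l))"
proof -
  have onee: "\<And>m'. (\<integral>\<^sup>+x. ennreal (iso_gauss_density TYPE('l) m' se x) \<partial>lborel) = 1"
    using iso_int_one[OF se se distr_density_one[OF de]] .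
  have [measurable]: "\<And>j. eta j \<in> borel_measurable M" using distributed_measurable[OF de] by simp
  define r where "r = sqrt (2 * k) / se"
  have r2: "se\<^sup>2 * r\<^sup>2 / 2 = k" using se k by (simp add: r_def power_divide)
  let ?C = "\<Sum>j\<in>J. (c j)\<^sup>2"
  interpret P: pair_sigma_finite M "lborel :: (real^'l) measure" ..
  have "(\<integral>\<^sup>+\<omega>. ennreal (exp (k * (norm (\<Sum>j\<in>J. c j *\<^sub>R eta j \<omega>))\<^sup>2)) \<partial>M)
      = (\<integral>\<^sup>+\<omega>. (\<integral>\<^sup>+h. ennreal (iso_gauss_density TYPE('l) 0 se h) * ennreal (exp (inner (r *\<^sub>R (\<Sum>j\<in>J. c j *\<^sub>R eta j \<omega>)) h)) \<partial>lborel) \<partial>M)"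
  proof (rule nn_integral_cong)
    fix \<omega>
    let ?w = "\<Sum>j\<in>J. c j *\<^sub>R eta j \<omega>"
    have "se\<^sup>2 * (norm (r *\<^sub>R ?w))\<^sup>2 / 2 = k * (norm ?w)\<^sup>2"
      using r2 by (simp add: power_mult_distrib abs_mult power2_abs)
    then show "ennreal (exp (k * (norm ?w)\<^sup>2)) = (\<integral>\<^sup>+h. ennreal (iso_gauss_density TYPE('l) 0 se h) * ennreal (exp (inner (r *\<^sub>R ?w) h)) \<partial>lborel)"
      using iso_mgf_lin[OF se onee, of 0 "r *\<^sub>R ?w"] by simp
  qed
  also have "\<dots> = (\<integral>\<^sup>+h. (\<integral>\<^sup>+\<omega>. ennreal (iso_gauss_density TYPE('l) 0 se h) * ennreal (exp (inner (r *\<^sub>R (\<Sum>j\<in>J. c j *\<^sub>R eta j \<omega>)) h)) \<partial>M) \<partial>lborel)"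
    by (rule P.Fubini'[symmetric]) measurable
  also have "\<dots> = (\<integral>\<^sup>+h. ennreal (iso_gauss_density TYPE('l) 0 se h) * ennreal (exp ((k * ?C) * (norm h)\<^sup>2)) \<partial>lborel)"
  proof (rule nn_integral_cong)
    fix h :: "real^'l"
    let ?G = "\<lambda>j (p::(real^'n) \<times> (real^'l)). ennreal (exp ((r * c j) * inner (snd p) h))"
    have Gm: "\<And>j. ?G j \<in> borel_measurable borel"
    proof -
      fix j
      have "(\<lambda>p::(real^'n) \<times> (real^'l). exp ((r * c j) * inner (snd p) h)) \<in> borel_measurable borel"
        by (intro borel_measurable_continuous_onI continuous_intros)
      then show "?G j \<in> borel_measurable borel" by simp
    qed
    have iv: "indep_vars (\<lambda>_. borel) (\<lambda>j \<omega>. ?G j (x j \<omega>, eta j \<omega>)) J"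
      by (rule indep_grouped[OF ind Gm])
    have "(\<integral>\<^sup>+\<omega>. ennreal (exp (inner (r *\<^sub>R (\<Sum>j\<in>J. c j *\<^sub>R eta j \<omega>)) h)) \<partial>M)
        = (\<integral>\<^sup>+\<omega>. (\<Prod>j\<in>J. ?G j (x j \<omega>, eta j \<omega>)) \<partial>M)"
      using fin by (simp add: inner_sum_left sum_distrib_left exp_sum prod_ennreal ac_simps)
    also have "\<dots> = (\<Prod>j\<in>J. \<integral>\<^sup>+\<omega>. ?G j (x j \<omega>, eta j \<omega>) \<partial>M)"
      by (rule indep_vars_nn_integral[OF fin iv]) simp
    also have "\<dots> = (\<Prod>j\<in>J. ennreal (exp ((k * (c j)\<^sup>2) * (norm h)\<^sup>2)))"
    proof (rule prod.cong[OF refl])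
      fix j assume "j \<in> J"
      have "(\<integral>\<^sup>+\<omega>. ?G j (x j \<omega>, eta j \<omega>) \<partial>M)
          = (\<integral>\<^sup>+e. ennreal (iso_gauss_density TYPE('l) 0 se e) * ennreal (exp (inner ((r * c j) *\<^sub>R h) e)) \<partial>lborel)"
        unfolding snd_conv by (subst distributed_nn_integral[OF de, symmetric]) (auto simp: inner_commute)
      also have "\<dots> = ennreal (exp (se\<^sup>2 * (norm ((r * c j) *\<^sub>R h))\<^sup>2 / 2))"
        using iso_mgf_lin[OF se onee, of 0 "(r * c j) *\<^sub>R h"] by simp
      also have "se\<^sup>2 * (norm ((r * c j) *\<^sub>R h))\<^sup>2 / 2 = (k * (c j)\<^sup>2) * (norm h)\<^sup>2"
        using r2 by (simp add: power_mult_distrib abs_mult power2_abs algebra_simps)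
      finally show "(\<integral>\<^sup>+\<omega>. ?G j (x j \<omega>, eta j \<omega>) \<partial>M) = ennreal (exp ((k * (c j)\<^sup>2) * (norm h)\<^sup>2))" .
    qed
    also have "\<dots> = ennreal (exp ((k * ?C) * (norm h)\<^sup>2))"
      using fin by (simp add: prod_ennreal exp_sum[symmetric] sum_distrib_left sum_distrib_right)
    finally have eq: "(\<integral>\<^sup>+\<omega>. ennreal (exp (inner (r *\<^sub>R (\<Sum>j\<in>J. c j *\<^sub>R eta j \<omega>)) h)) \<partial>M) = ennreal (exp ((k * ?C) * (norm h)\<^sup>2))" .
    show "(\<integral>\<^sup>+\<omega>. ennreal (iso_gauss_density TYPE('l) 0 se h) * ennreal (exp (inner (r *\<^sub>R (\<Sum>j\<in>J. c j *\<^sub>R eta j \<omega>)) h)) \<partial>M)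
        = ennreal (iso_gauss_density TYPE('l) 0 se h) * ennreal (exp ((k * ?C) * (norm h)\<^sup>2))"
    proof -
      have m: "(\<lambda>\<omega>. ennreal (exp (inner (r *\<^sub>R (\<Sum>j\<in>J. c j *\<^sub>R eta j \<omega>)) h))) \<in> borel_measurable M"
        by measurable
      show ?thesis unfolding nn_integral_cmult[OF m] eq ..
    qed
  qed
  also have "\<dots> = ennreal ((1 / sqrt (1 - 2 * (k * ?C) * se\<^sup>2)) ^ CARD('l))"
    by (rule iso_mgf_quad[OF se _ onee]) (use kC in \<open>simp add: ac_simps\<close>)
  finally show ?thesis .
qed

lemma norm_sq_vec: "(norm (v :: real ^ 'n::finite))\<^sup>2 = (\<Sum>b\<in>UNIV. (v $ b)\<^sup>2)"
  unfolding power2_norm_eq_inner inner_vec_def by (simp add: power2_eq_square)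

lemma (in prob_space) mgf_Q:
  fixes x :: "nat \<Rightarrow> 'a \<Rightarrow> real ^ 'n::finite" and eta :: "nat \<Rightarrow> 'a \<Rightarrow> real ^ 'l::finite"
    and mu :: "nat \<Rightarrow> real ^ 'n"
  assumes ind: "indep_vars (\<lambda>_. borel)
           (\<lambda>i \<omega>. case i of Inl j \<Rightarrow> (x j \<omega>, 0) | Inr j \<Rightarrow> (0, eta j \<omega>)) (UNIV :: (nat + nat) set)"
    and de: "\<And>j. distributed M lborel (eta j) (\<lambda>v. ennreal (iso_gauss_density TYPE('l) 0 se v))"
    and se: "se > 0" and fin: "finite J" and th: "th \<ge> 0"
    and Tb: "se\<^sup>2 * (\<Sum>j\<in>J. (norm (mu j))\<^sup>2) \<le> Tb" and thT: "2 * th * Tb < 1"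
  shows "(\<integral>\<^sup>+\<omega>. ennreal (exp (th * (\<Sum>b\<in>UNIV. (norm (\<Sum>j\<in>J. (mu j $ b) *\<^sub>R eta j \<omega>))\<^sup>2))) \<partial>M)
     \<le> ennreal ((1 / sqrt (1 - 2 * th * Tb)) ^ CARD('l))"
proof -
  have [measurable]: "\<And>j. eta j \<in> borel_measurable M" using distributed_measurable[OF de] by simp
  define c where "c b = (\<Sum>j\<in>J. (mu j $ b)\<^sup>2)" for b
  define Ct where "Ct = (\<Sum>b\<in>UNIV. c b)"
  have Ct_eq: "Ct = (\<Sum>j\<in>J. (norm (mu j))\<^sup>2)"
    unfolding Ct_def c_def norm_sq_vec by (rule sum.swap)
  have c0: "\<And>b. c b \<ge> 0" by (simp add: c_def sum_nonneg)
  have Tb0: "Tb \<ge> 0" using Tb se by (smt (verit) mult_nonneg_nonneg sum_nonneg zero_le_power2)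
  have CtT: "se\<^sup>2 * Ct \<le> Tb" using Tb Ct_eq by simp
  define B where "B = {b. c b > 0}"
  have Y0: "\<And>b \<omega>. b \<notin> B \<Longrightarrow> (\<Sum>j\<in>J. (mu j $ b) *\<^sub>R eta j \<omega>) = 0"
  proof -
    fix b \<omega> assume "b \<notin> B"
    then have "c b = 0" using c0[of b] by (simp add: B_def)
    then have "\<forall>j\<in>J. (mu j $ b)\<^sup>2 = 0" unfolding c_def using fin by (subst (asm) sum_nonneg_eq_0_iff) auto
    then show "(\<Sum>j\<in>J. (mu j $ b) *\<^sub>R eta j \<omega>) = 0" by simp
  qed
  have Qeq: "\<And>\<omega>. (\<Sum>b\<in>UNIV. (norm (\<Sum>j\<in>J. (mu j $ b) *\<^sub>R eta j \<omega>))\<^sup>2) = (\<Sum>b\<in>B. (norm (\<Sum>j\<in>J. (mu j $ b) *\<^sub>R eta j \<omega>))\<^sup>2)"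
    by (rule sum.mono_neutral_right) (auto simp: Y0)
  define V where "V = (1 / sqrt (1 - 2 * th * Tb)) ^ CARD('l)"
  have V1: "1 \<le> V"
  proof -
    have "0 < 1 - 2 * th * Tb" "1 - 2 * th * Tb \<le> 1" using thT th Tb0 by auto
    then have "1 \<le> 1 / sqrt (1 - 2 * th * Tb)" by (simp add: real_sqrt_le_1_iff)
    then show ?thesis unfolding V_def by (rule one_le_power)
  qed
  show ?thesis
  proof (cases "B = {}")
    case True
    then have "(\<integral>\<^sup>+\<omega>. ennreal (exp (th * (\<Sum>b\<in>UNIV. (norm (\<Sum>j\<in>J. (mu j $ b) *\<^sub>R eta j \<omega>))\<^sup>2))) \<partial>M) = 1"
      unfolding Qeq by (simp add: emeasure_space_1)
    then show ?thesis using V1 by (simp add: V_def[symmetric])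
  next
    case False
    have finB: "finite B" by simp
    have cpos: "\<And>b. b \<in> B \<Longrightarrow> c b > 0" by (simp add: B_def)
    have CtB: "Ct = (\<Sum>b\<in>B. c b)"
      unfolding Ct_def by (rule sum.mono_neutral_right) (auto simp: B_def c0 less_le)
    have Ctpos: "Ct > 0" unfolding CtB using False cpos by (simp add: sum_pos)
    define V' where "V' = (1 / sqrt (1 - 2 * (th * Ct) * se\<^sup>2)) ^ CARD('l)"
    have V'V: "V' \<le> V"
    proof -
      have a: "0 < 1 - 2 * th * Tb" using thT by simp
      have b: "1 - 2 * th * Tb \<le> 1 - 2 * (th * Ct) * se\<^sup>2"
        using mult_left_mono[OF CtT th] by (simp add: algebra_simps)
      have "1 / sqrt (1 - 2 * (th * Ct) * se\<^sup>2) \<le> 1 / sqrt (1 - 2 * th * Tb)"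
        using a b by (intro divide_left_mono real_sqrt_le_mono) auto
      moreover have "0 \<le> 1 / sqrt (1 - 2 * (th * Ct) * se\<^sup>2)" using a b by simp
      ultimately show ?thesis unfolding V'_def V_def by (intro power_mono) auto
    qed
    let ?Y = "\<lambda>b \<omega>. (\<Sum>j\<in>J. (mu j $ b) *\<^sub>R eta j \<omega>)"
    have pt: "\<And>\<omega>. exp (th * (\<Sum>b\<in>B. (norm (?Y b \<omega>))\<^sup>2)) \<le> (\<Sum>b\<in>B. (c b / Ct) * exp ((th * Ct / c b) * (norm (?Y b \<omega>))\<^sup>2))"
    proof -
      fix \<omega>
      have "exp (\<Sum>b\<in>B. (c b / Ct) *\<^sub>R ((th * Ct / c b) * (norm (?Y b \<omega>))\<^sup>2)) \<le> (\<Sum>b\<in>B. (c b / Ct) * exp ((th * Ct / c b) * (norm (?Y b \<omega>))\<^sup>2))"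
        by (rule convex_on_sum[OF finB False exp_convex]) (use Ctpos c0 in \<open>auto simp: CtB[symmetric] sum_divide_distrib[symmetric]\<close>)
      moreover have "(\<Sum>b\<in>B. (c b / Ct) *\<^sub>R ((th * Ct / c b) * (norm (?Y b \<omega>))\<^sup>2)) = th * (\<Sum>b\<in>B. (norm (?Y b \<omega>))\<^sup>2)"
        using Ctpos cpos by (auto simp: sum_distrib_left intro!: sum.cong dest: cpos)
      ultimately show "?thesis \<omega>" by simp
    qed
    have "(\<integral>\<^sup>+\<omega>. ennreal (exp (th * (\<Sum>b\<in>UNIV. (norm (?Y b \<omega>))\<^sup>2))) \<partial>M)
        \<le> (\<integral>\<^sup>+\<omega>. (\<Sum>b\<in>B. ennreal (c b / Ct) * ennreal (exp ((th * Ct / c b) * (norm (?Y b \<omega>))\<^sup>2))) \<partial>M)"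
    proof (rule nn_integral_mono)
      fix \<omega>
      have "ennreal (exp (th * (\<Sum>b\<in>UNIV. (norm (?Y b \<omega>))\<^sup>2))) \<le> ennreal (\<Sum>b\<in>B. (c b / Ct) * exp ((th * Ct / c b) * (norm (?Y b \<omega>))\<^sup>2))"
        unfolding Qeq using pt[of \<omega>] by (rule ennreal_leI)
      also have "\<dots> = (\<Sum>b\<in>B. ennreal (c b / Ct) * ennreal (exp ((th * Ct / c b) * (norm (?Y b \<omega>))\<^sup>2)))"
        using Ctpos c0 by (subst sum_ennreal[symmetric]) (auto simp: ennreal_mult'[symmetric])
      finally show "ennreal (exp (th * (\<Sum>b\<in>UNIV. (norm (?Y b \<omega>))\<^sup>2))) \<le> (\<Sum>b\<in>B. ennreal (c b / Ct) * ennreal (exp ((th * Ct / c b) * (norm (?Y b \<omega>))\<^sup>2)))" .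
    qed
    also have "\<dots> = (\<Sum>b\<in>B. ennreal (c b / Ct) * (\<integral>\<^sup>+\<omega>. ennreal (exp ((th * Ct / c b) * (norm (?Y b \<omega>))\<^sup>2)) \<partial>M))"
      by (subst nn_integral_sum) (auto intro!: sum.cong nn_integral_cmult)
    also have "\<dots> = (\<Sum>b\<in>B. ennreal (c b / Ct) * ennreal V')"
    proof (rule sum.cong[OF refl])
      fix b assume bB: "b \<in> B"
      have k0: "th * Ct / c b \<ge> 0" using th Ctpos c0[of b] by simp
      have eqc: "(th * Ct / c b) * (\<Sum>j\<in>J. (mu j $ b)\<^sup>2) = th * Ct" using cpos[OF bB] by (simp add: c_def[symmetric])
      have kC: "2 * (th * Ct / c b) * se\<^sup>2 * (\<Sum>j\<in>J. (mu j $ b)\<^sup>2) < 1"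
      proof -
        have "2 * (th * Ct / c b) * se\<^sup>2 * (\<Sum>j\<in>J. (mu j $ b)\<^sup>2) = 2 * th * (se\<^sup>2 * Ct)"
          using cpos[OF bB] unfolding c_def[symmetric] by (simp add: field_simps)
        also have "\<dots> \<le> 2 * th * Tb" using CtT th by (simp add: mult_left_mono)
        finally show ?thesis using thT by simp
      qed
      have "(\<integral>\<^sup>+\<omega>. ennreal (exp ((th * Ct / c b) * (norm (?Y b \<omega>))\<^sup>2)) \<partial>M) = ennreal V'"
        using mgf_Y[OF ind de se fin k0 kC] unfolding eqc V'_def by simp
      then show "ennreal (c b / Ct) * (\<integral>\<^sup>+\<omega>. ennreal (exp ((th * Ct / c b) * (norm (?Y b \<omega>))\<^sup>2)) \<partial>M) = ennreal (c b / Ct) * ennreal V'"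
        by simp
    qed
    also have "\<dots> = ennreal V'"
    proof -
      have "2 * (th * Ct) * se\<^sup>2 \<le> 2 * th * Tb" using mult_left_mono[OF CtT th] by (simp add: algebra_simps)
      then have "0 < 1 - 2 * (th * Ct) * se\<^sup>2" using thT by simp
      then have V'0: "V' \<ge> 0" unfolding V'_def by simp
      have "(\<Sum>b\<in>B. ennreal (c b / Ct) * ennreal V') = ennreal (\<Sum>b\<in>B. (c b / Ct) * V')"
        using Ctpos c0 V'0 by (subst sum_ennreal[symmetric]) (auto simp: ennreal_mult'[symmetric])
      also have "(\<Sum>b\<in>B. (c b / Ct) * V') = V'"
        using Ctpos by (simp add: sum_distrib_right[symmetric] sum_divide_distrib[symmetric] CtB[symmetric])
      finally show ?thesis .
    qed
    also have "\<dots> \<le> ennreal V" using V'V by (rule ennreal_leI)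
    finally show ?thesis unfolding V_def .
  qed
qed

lemma packing_card:
  fixes S :: "(real ^ 'n::finite) set"
  assumes e: "e > 0" and fin: "finite S" and sub: "\<And>a. a \<in> S \<Longrightarrow> norm a = 1"
    and sep: "\<And>a b. a \<in> S \<Longrightarrow> b \<in> S \<Longrightarrow> a \<noteq> b \<Longrightarrow> dist a b > e"
  shows "real (card S) \<le> (1 + 2 / e) ^ CARD('n)"
proof -
  let ?V = "unit_ball_vol (real CARD('n))"
  have Vpos: "?V > 0" by simp
  have disj: "disjoint_family_on (\<lambda>a. cball a (e/2)) S"
    unfolding disjoint_family_on_def
  proof (intro ballI impI)
    fix a b assume ab: "a \<in> S" "b \<in> S" "a \<noteq> b"
    show "cball a (e/2) \<inter> cball b (e/2) = {}"
    proof (rule ccontr)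
      assume "cball a (e/2) \<inter> cball b (e/2) \<noteq> {}"
      then obtain y where "dist a y \<le> e/2" "dist b y \<le> e/2" by auto
      then have "dist a b \<le> e" using dist_triangle2[of a b y] by simp
      then show False using sep[OF ab] by simp
    qed
  qed
  have sub2: "(\<Union>a\<in>S. cball a (e/2)) \<subseteq> cball 0 (1 + e/2)"
  proof
    fix y assume "y \<in> (\<Union>a\<in>S. cball a (e/2))"
    then obtain a where a: "a \<in> S" "dist a y \<le> e/2" by auto
    have "norm y \<le> norm a + norm (y - a)" using norm_triangle_ineq[of a "y - a"] by simp
    also have "\<dots> \<le> 1 + e/2" using sub[OF a(1)] a(2) by (simp add: dist_norm norm_minus_commute)
    finally show "y \<in> cball 0 (1 + e/2)" by simp
  qed
  have "ennreal (real (card S) * (?V * (e/2) ^ CARD('n))) = (\<Sum>a\<in>S. emeasure lborel (cball a (e/2)))"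
    using e by (simp add: emeasure_cball ennreal_of_nat_eq_real_of_nat ennreal_mult'')
  also have "\<dots> = emeasure lborel (\<Union>a\<in>S. cball a (e/2))"
    by (rule sum_emeasure[OF _ disj fin]) auto
  also have "\<dots> \<le> emeasure lborel (cball (0::real^'n) (1 + e/2))"
    by (rule emeasure_mono[OF sub2]) auto
  also have "\<dots> = ennreal (?V * (1 + e/2) ^ CARD('n))"
    using e by (simp add: emeasure_cball)
  finally have le: "ennreal (real (card S) * (?V * (e/2) ^ CARD('n))) \<le> ennreal (?V * (1 + e/2) ^ CARD('n))" .
  have "real (card S) * (?V * (e/2) ^ CARD('n)) \<le> ?V * (1 + e/2) ^ CARD('n)"
  proof -
    have "0 \<le> ?V * (1 + e/2) ^ CARD('n)" using e Vpos by simp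
    then show ?thesis using le ennreal_le_iff by blast
  qed
  then have "?V * (real (card S) * (e/2) ^ CARD('n)) \<le> ?V * (1 + e/2) ^ CARD('n)"
    by (simp only: mult.left_commute)
  then have "real (card S) * (e/2) ^ CARD('n) \<le> (1 + e/2) ^ CARD('n)"
    using Vpos by (simp only: mult_le_cancel_left_pos)
  moreover have ep: "0 < (e/2) ^ CARD('n)" using e by simp
  ultimately have "real (card S) \<le> (1 + e/2) ^ CARD('n) / (e/2) ^ CARD('n)"
    by (simp only: pos_le_divide_eq)
  also have "\<dots> = ((1 + e/2) / (e/2)) ^ CARD('n)"
    by (simp only: power_divide)
  also have "(1 + e/2) / (e/2) = 1 + 2 / e"
    using e by (simp add: field_simps)
  finally show ?thesis .
qed

lemma net_exists:
  assumes e: "e > 0"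
  shows "\<exists>N. N \<subseteq> {v::real^'n::finite. norm v = 1} \<and> finite N \<and> real (card N) \<le> (1 + 2/e) ^ CARD('n)
          \<and> (\<forall>v. norm v = 1 \<longrightarrow> (\<exists>w\<in>N. norm (v - w) \<le> e))"
proof -
  define P where "P S \<longleftrightarrow> S \<subseteq> {v::real^'n. norm v = 1} \<and> finite S \<and> (\<forall>a\<in>S. \<forall>b\<in>S. a \<noteq> b \<longrightarrow> dist a b > e)" for S
  have bd: "\<And>S. P S \<Longrightarrow> card S < nat (ceiling ((1 + 2/e) ^ CARD('n))) + 1"
  proof -
    fix S assume "P S"
    then have "real (card S) \<le> (1 + 2/e) ^ CARD('n)"
      unfolding P_def by (intro packing_card[OF e]) auto
    then show "card S < nat (ceiling ((1 + 2/e) ^ CARD('n))) + 1"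
      by linarith
  qed
  have "P {}" by (simp add: P_def)
  from ex_has_greatest_nat[of P "{}" card, OF this] bd
  obtain N where N: "P N" and max: "\<And>S. P S \<Longrightarrow> card S \<le> card N" by blast
  have cov: "\<forall>v. norm v = 1 \<longrightarrow> (\<exists>w\<in>N. norm (v - w) \<le> e)"
  proof (intro allI impI, rule ccontr)
    fix v :: "real^'n" assume v: "norm v = 1" and nv: "\<not> (\<exists>w\<in>N. norm (v - w) \<le> e)"
    have vN: "v \<notin> N" using nv e by force
    have "P (insert v N)" using N v nv unfolding P_def
      by (auto simp: dist_norm norm_minus_commute not_le)
    then have "card (insert v N) \<le> card N" by (rule max)
    moreover have "card (insert v N) = card N + 1" using vN N by (simp add: P_def)
    ultimately show False by simp
  qed
  show ?thesis
    using N cov packing_card[OF e, of N] unfolding P_def by auto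
qed

lemma norm_mat_vec_le:
  fixes A :: "real ^ 'n::finite ^ 'l::finite"
  shows "norm (A *v x) \<le> norm A * norm x"
proof -
  have "(norm (A *v x))\<^sup>2 = (\<Sum>i\<in>UNIV. (inner (A $ i) x)\<^sup>2)"
    unfolding power2_norm_eq_inner inner_vec_def[of "A *v x"]
    by (simp add: matrix_vector_mult_def inner_vec_def power2_eq_square)
  also have "\<dots> \<le> (\<Sum>i\<in>UNIV. (norm (A $ i))\<^sup>2 * (norm x)\<^sup>2)"
  proof (rule sum_mono)
    fix i
    have "\<bar>inner (A $ i) x\<bar> \<le> norm (A $ i) * norm x" by (rule Cauchy_Schwarz_ineq2)
    then have "(inner (A $ i) x)\<^sup>2 \<le> (norm (A $ i) * norm x)\<^sup>2"
      by (metis abs_ge_zero power2_abs power_mono)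
    then show "(inner (A $ i) x)\<^sup>2 \<le> (norm (A $ i))\<^sup>2 * (norm x)\<^sup>2" by (simp add: power_mult_distrib)
  qed
  also have "\<dots> = (norm A * norm x)\<^sup>2"
  proof -
    have "(norm A)\<^sup>2 = (\<Sum>i\<in>UNIV. (norm (A $ i))\<^sup>2)"
      unfolding power2_norm_eq_inner inner_vec_def[of A] by simp
    then show ?thesis by (simp add: power_mult_distrib sum_distrib_right)
  qed
  finally show ?thesis by (rule power2_le_imp_le) simp
qed

lemma spec_norm_le_norm: "spec_norm (A :: real ^ 'n::finite ^ 'l::finite) \<le> norm A"
  unfolding spec_norm_def by (rule onorm_le) (rule norm_mat_vec_le)

lemma spec_norm_triangle: "spec_norm ((A :: real ^ 'n::finite ^ 'l::finite) + B) \<le> spec_norm A + spec_norm B"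
proof -
  have e: "(\<lambda>v. (A + B) *v v) = (\<lambda>v. A *v v + B *v v)"
    by (simp add: fun_eq_iff matrix_vector_mult_add_rdistrib)
  have "spec_norm (A + B) = onorm (\<lambda>v. A *v v + B *v v)"
    unfolding spec_norm_def e[symmetric] ..
  also have "\<dots> \<le> onorm (\<lambda>v. A *v v) + onorm (\<lambda>v. B *v v)"
    by (rule onorm_triangle) auto
  finally show ?thesis unfolding spec_norm_def .
qed

lemma spec_norm_net:
  fixes A :: "real ^ 'n::finite ^ 'l::finite"
  assumes Nl: "\<And>u. norm u = 1 \<Longrightarrow> \<exists>w\<in>Nl. norm (u - w) \<le> 1/4" "\<And>w. w \<in> Nl \<Longrightarrow> norm w = 1"
    and Nn: "\<And>v. norm v = 1 \<Longrightarrow> \<exists>w\<in>Nn. norm (v - w) \<le> 1/4"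
    and m: "\<And>u v. u \<in> Nl \<Longrightarrow> v \<in> Nn \<Longrightarrow> inner u (A *v v) \<le> m"
  shows "spec_norm A \<le> 2 * m"
proof -
  define S where "S = spec_norm A"
  have bl: "bounded_linear (\<lambda>v. A *v v)" by simp
  have onA: "\<And>y. norm (A *v y) \<le> S * norm y"
    unfolding S_def spec_norm_def by (rule onorm[OF bl])
  have S0: "S \<ge> 0" unfolding S_def spec_norm_def by (rule onorm_pos_le[OF bl])
  have key: "\<And>u v. norm u = 1 \<Longrightarrow> norm v = 1 \<Longrightarrow> inner u (A *v v) \<le> m + S/2"
  proof -
    fix u :: "real^'l" and v :: "real^'n" assume u: "norm u = 1" and v: "norm v = 1"
    obtain u0 where u0: "u0 \<in> Nl" "norm (u - u0) \<le> 1/4" using Nl(1)[OF u] by blast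
    obtain v0 where v0: "v0 \<in> Nn" "norm (v - v0) \<le> 1/4" using Nn[OF v] by blast
    have u01: "norm u0 = 1" using Nl(2)[OF u0(1)] .
    have dec: "inner u (A *v v) = inner u0 (A *v v0) + inner (u - u0) (A *v v) + inner u0 (A *v (v - v0))"
      by (simp add: inner_diff_left inner_diff_right matrix_vector_mult_diff_distrib)
    have t1: "inner (u - u0) (A *v v) \<le> S / 4"
    proof -
      have "inner (u - u0) (A *v v) \<le> norm (u - u0) * norm (A *v v)" by (rule norm_cauchy_schwarz)
      also have "\<dots> \<le> (1/4) * S"
        using onA[of v] v u0(2) by (intro mult_mono) auto
      finally show ?thesis by simp
    qed
    have t2: "inner u0 (A *v (v - v0)) \<le> S / 4"
    proof -
      have "inner u0 (A *v (v - v0)) \<le> norm u0 * norm (A *v (v - v0))" by (rule norm_cauchy_schwarz)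
      also have "\<dots> \<le> S * norm (v - v0)" using u01 onA[of "v - v0"] by simp
      also have "\<dots> \<le> S * (1/4)" using v0(2) S0 by (intro mult_left_mono) auto
      finally show ?thesis by simp
    qed
    show "inner u (A *v v) \<le> m + S/2" using dec t1 t2 m[OF u0(1) v0(1)] by simp
  qed
  obtain i :: 'l where True by simp
  have mS: "0 \<le> m + S/2"
  proof -
    obtain k :: 'n where True by simp
    have "inner (axis i 1) (A *v axis k 1) \<le> m + S/2" by (rule key) simp_all
    moreover have "inner (- axis i 1) (A *v axis k 1) \<le> m + S/2" by (rule key) simp_all
    ultimately show ?thesis by simp
  qed
  have "onorm (\<lambda>v. A *v v) \<le> m + S/2"
  proof (rule onorm_le)
    fix x :: "real^'n"
    show "norm (A *v x) \<le> (m + S / 2) * norm x"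
    proof (cases "x = 0")
      case True then show ?thesis by simp
    next
      case False
      define v where "v = (1 / norm x) *\<^sub>R x"
      have v: "norm v = 1" using False by (simp add: v_def)
      have Av: "A *v x = norm x *\<^sub>R (A *v v)" using False by (simp add: v_def matrix_vector_mult_scaleR)
      have "norm (A *v v) \<le> m + S/2"
      proof (cases "A *v v = 0")
        case True then show ?thesis using mS by simp
      next
        case False
        define u where "u = (1 / norm (A *v v)) *\<^sub>R (A *v v)"
        have u: "norm u = 1" using False by (simp add: u_def)
        have "inner u (A *v v) = norm (A *v v)"
          using False by (simp add: u_def power2_norm_eq_inner[symmetric] power2_eq_square)
        then show ?thesis using key[OF u v] by simp
      qed
      then show ?thesis unfolding Av using mult_left_mono[of "norm (A *v v)" "m + S/2" "norm x"]
        by (simp add: mult.commute)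
    qed
  qed
  then have "S \<le> m + S/2" unfolding S_def spec_norm_def .
  then show ?thesis unfolding S_def by simp
qed

lemma outer_mult: "inner u (outer e z *v v) = inner u e * inner z v"
  by (simp add: outer_def matrix_vector_mult_def inner_vec_def sum_distrib_left sum_distrib_right ac_simps) (rule sum.swap)

lemma sum_mat_vec: "finite J \<Longrightarrow> (\<Sum>j\<in>J. B j) *v v = (\<Sum>j\<in>J. B j *v v)"
  by (induction J rule: finite_induct) (simp_all add: matrix_vector_mult_add_rdistrib)

lemma ln_le_of_exp: "0 < (x::real) \<Longrightarrow> x \<le> exp y \<Longrightarrow> ln x \<le> y"
  using ln_le_cancel_iff[of x "exp y"] by simp

lemma exp_pow_split: "exp (real k * y) = exp y ^ k"
  by (simp add: exp_of_nat_mult)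

lemma exp_lb: "0 \<le> y \<Longrightarrow> (1 + y + y\<^sup>2/2) ^ k \<le> exp (real k * y)"
  unfolding exp_pow_split by (intro power_mono exp_lower_Taylor_quadratic) (auto simp: add_nonneg_nonneg)

lemma ln18: "ln (18::real) \<le> 3"
proof (rule ln_le_of_exp)
  have "(1 + 1/2 + (1/2)\<^sup>2/2) ^ 6 \<le> exp (real 6 * (1/2::real))" by (rule exp_lb) simp
  moreover have "(18::real) \<le> (1 + 1/2 + (1/2)\<^sup>2/2) ^ 6" by (simp add: power2_eq_square eval_nat_numeral)
  ultimately show "18 \<le> exp (3::real)" by simp
qed simp

lemma ln9: "ln (9::real) \<le> 9/4"
proof (rule ln_le_of_exp)
  have "(1 + 9/32 + (9/32)\<^sup>2/2) ^ 8 \<le> exp (real 8 * (9/32::real))" by (rule exp_lb) simp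
  moreover have "(9::real) \<le> (1 + 9/32 + (9/32)\<^sup>2/2) ^ 8" by (simp add: power2_eq_square eval_nat_numeral)
  ultimately show "9 \<le> exp (9/4::real)" by simp
qed simp

lemma ln2599: "ln (25/9::real) \<le> 11/10"
proof (rule ln_le_of_exp)
  have "(1 + 11/20 + (11/20)\<^sup>2/2) ^ 2 \<le> exp (real 2 * (11/20::real))" by (rule exp_lb) simp
  moreover have "(25/9::real) \<le> (1 + 11/20 + (11/20)\<^sup>2/2) ^ 2" by (simp add: power2_eq_square eval_nat_numeral)
  ultimately show "25/9 \<le> exp (11/10::real)" by simp
qed simp

lemma ln5: "ln (5::real) \<le> 2"
proof (rule ln_le_of_exp)
  have "(1 + 2 + (2::real)\<^sup>2/2) ^ 1 \<le> exp (real 1 * (2::real))" by (rule exp_lb) simp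
  then show "5 \<le> exp (2::real)" by simp
qed simp

lemma ln_ge_1_minus_inv: "0 < (x::real) \<Longrightarrow> 1 - 1/x \<le> ln x"
  using ln_le_minus_one[of "1/x"] by (simp add: ln_div)

lemma ln19: "9/19 \<le> ln (19/10::real)"
  using ln_ge_1_minus_inv[of "19/10::real"] by simp

lemma ln43: "ln (4/3::real) \<le> 1/3"
  using ln_le_minus_one[of "4/3::real"] by simp

lemma ln2: "2/3 \<le> ln (2::real)" by (rule ln2_ge_two_thirds)

lemma convex_quad_le0:
  fixes a b c x x0 x1 :: real
  assumes a: "a \<ge> 0" and x: "x0 \<le> x" "x \<le> x1"
    and f0: "a * x0\<^sup>2 + b * x0 + c \<le> 0" and f1: "a * x1\<^sup>2 + b * x1 + c \<le> 0"
  shows "a * x\<^sup>2 + b * x + c \<le> 0"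
proof (cases "x0 = x1")
  case True then show ?thesis using x f0 by simp
next
  case False
  then have d: "x1 - x0 > 0" using x by simp
  have id: "(x1 - x0) * (a * x\<^sup>2 + b * x + c) = (x1 - x) * (a * x0\<^sup>2 + b * x0 + c) + (x - x0) * (a * x1\<^sup>2 + b * x1 + c) + a * (x1 - x0) * ((x - x0) * (x - x1))"
    by (simp add: power2_eq_square algebra_simps)
  have t1: "(x1 - x) * (a * x0\<^sup>2 + b * x0 + c) \<le> 0" using x f0 by (intro mult_nonneg_nonpos) auto
  have t2: "(x - x0) * (a * x1\<^sup>2 + b * x1 + c) \<le> 0" using x f1 by (intro mult_nonneg_nonpos) auto
  have t3: "a * (x1 - x0) * ((x - x0) * (x - x1)) \<le> 0"
    using a d x by (intro mult_nonneg_nonpos mult_nonneg_nonneg mult_nonneg_nonpos) auto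
  have "(x1 - x0) * (a * x\<^sup>2 + b * x + c) \<le> 0" unfolding id using t1 t2 t3 by linarith
  then show ?thesis using d by (simp add: mult_le_0_iff)
qed

lemma alpha_reduce:
  fixes K t :: nat and d p hb E :: real
  assumes p0: "0 \<le> p" and p1: "p < 1" and d0: "0 < d"
    and hb: "ln (1 / (1 - p\<^sup>2)) \<le> hb"
    and E: "real K * ln 9 - 2 * p * sqrt (real t * real K * ln (9/d)) + (real t / 2) * hb \<le> ln (19/10) - ln (1/d)"
  shows "9 ^ K * exp (- (2 * p * sqrt (real t * real K * ln (9/d)))) * (1 / sqrt (1 - p\<^sup>2)) ^ t \<le> 19/10 * d"
proof -
  have "p\<^sup>2 < 1\<^sup>2" using p0 p1 by (intro power_strict_mono) auto
  then have y: "0 < 1 - p\<^sup>2" by simp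
  define w where "w = 1 / sqrt (1 - p\<^sup>2)"
  have w0: "w > 0" using y by (simp add: w_def)
  have lnw: "ln w = ln (1 / (1 - p\<^sup>2)) / 2"
    using y by (simp add: w_def ln_div ln_sqrt)
  have "(9::real) ^ K = exp (real K * ln 9)" by (simp add: exp_of_nat_mult)
  moreover have "w ^ t = exp (real t * ln w)" using w0 by (simp add: exp_of_nat_mult)
  ultimately have "9 ^ K * exp (- (2 * p * sqrt (real t * real K * ln (9/d)))) * w ^ t
      = exp (real K * ln 9) * exp (- (2 * p * sqrt (real t * real K * ln (9/d)))) * exp (real t * ln w)"
    by simp
  also have "\<dots> = exp (real K * ln 9 - 2 * p * sqrt (real t * real K * ln (9/d)) + real t * ln w)"
    by (simp only: exp_add[symmetric] diff_conv_add_uminus)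
  also have "\<dots> \<le> exp (real K * ln 9 - 2 * p * sqrt (real t * real K * ln (9/d)) + (real t / 2) * hb)"
  proof -
    have "real t * ln w \<le> (real t / 2) * hb" unfolding lnw using hb by (simp add: mult_left_mono)
    then show ?thesis by simp
  qed
  also have "\<dots> \<le> exp (ln (19/10) - ln (1/d))" using E by simp
  also have "\<dots> = exp (ln (19/10)) / exp (ln (1/d))" by (rule exp_diff)
  also have "\<dots> = (19/10) / (1/d)" using d0 by (simp only: exp_ln) simp_all
  also have "\<dots> = 19/10 * d" by simp
  finally show ?thesis unfolding w_def .
qed

lemma alpha_numeric:
  fixes K t :: nat and d :: real
  assumes K: "K \<ge> 2" and d0: "0 < d" and d1: "d < 1/2" and t: "real t \<ge> 2 * real K * ln (1/d)"
  shows "\<exists>p. 0 \<le> p \<and> p < 1 \<and> 9 ^ K * exp (- (2 * p * sqrt (real t * real K * ln (9/d)))) * (1 / sqrt (1 - p\<^sup>2)) ^ t \<le> 19/10 * d"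
proof -
  define L1 where "L1 = ln (1/d)"
  define A where "A = ln (9/d)"
  define X where "X = real t"
  define k where "k = real K"
  have k2: "k \<ge> 2" using K by (simp add: k_def)
  have L1ge: "L1 \<ge> ln 2" unfolding L1_def using d0 d1 by (subst ln_le_cancel_iff) (auto simp: field_simps)
  then have L1pos: "L1 \<ge> 2/3" using ln2 by simp
  have A_eq: "A = ln 9 + L1" unfolding A_def L1_def using d0 by (simp add: ln_div)
  have ln9pos: "ln (9::real) \<ge> 0" by simp
  have Apos: "A > 0" using A_eq L1pos ln9pos by linarith
  have kA: "k * A > 0" using k2 Apos by simp
  have ln19nn: "0 \<le> ln (19/10::real)" by simp
  have ln19b: "ln (19/10::real) < L1"
  proof -
    have "ln (19/10::real) < ln 2" by (subst ln_less_cancel_iff) auto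
    then show ?thesis using L1ge by linarith
  qed
  have kL1: "L1 \<le> k * L1" using mult_right_mono[of 1 k L1] k2 L1pos by simp
  have X0: "X \<ge> 0" by (simp add: X_def)
  have tX: "X \<ge> 2 * k * L1" using t by (simp add: X_def k_def L1_def)
  have sq: "sqrt (real t * real K * ln (9/d)) = sqrt (X * (k * A))" by (simp add: X_def k_def A_def ac_simps)
  have red: "\<And>p hb. 0 \<le> p \<Longrightarrow> p < 1 \<Longrightarrow> ln (1 / (1 - p\<^sup>2)) \<le> hb \<Longrightarrow>
      k * ln 9 - 2 * p * sqrt (X * (k * A)) + (X / 2) * hb \<le> ln (19/10) - L1 \<Longrightarrow>
      9 ^ K * exp (- (2 * p * sqrt (real t * real K * ln (9/d)))) * (1 / sqrt (1 - p\<^sup>2)) ^ t \<le> 19/10 * d"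
    by (rule alpha_reduce[OF _ _ d0]) (auto simp: sq X_def k_def L1_def)
  consider "X \<ge> 12 * (k * A)" | "2 * (k * A) \<le> X" "X < 12 * (k * A)" | "X < 2 * (k * A)" by linarith
  then show ?thesis
  proof cases
    case 1
    then have Xpos: "X > 0" using kA by simp
    define p where "p = 2 * sqrt (k * A / X)"
    have kAX: "0 \<le> k * A / X" using less_imp_le[OF divide_pos_pos[OF kA Xpos]] .
    have p0: "p \<ge> 0" using kAX by (simp add: p_def)
    have p2: "p\<^sup>2 = 4 * (k * A) / X" using kAX by (simp add: p_def power_mult_distrib)
    have p13: "p\<^sup>2 \<le> 1/3" unfolding p2 using 1 Xpos by (simp add: field_simps)
    have p1: "p < 1"
    proof -
      have "p\<^sup>2 < 1\<^sup>2" using p13 by simp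
      then show ?thesis using p0 by (simp add: power_less_imp_less_base)
    qed
    have hb: "ln (1 / (1 - p\<^sup>2)) \<le> 3/2 * p\<^sup>2"
    proof -
      have y: "0 < 1 - p\<^sup>2" using p13 by simp
      have "ln (1 / (1 - p\<^sup>2)) \<le> 1 / (1 - p\<^sup>2) - 1" using y by (intro ln_le_minus_one) simp
      also have "\<dots> = p\<^sup>2 / (1 - p\<^sup>2)" using y by (simp add: field_simps)
      also have "\<dots> \<le> p\<^sup>2 / (2/3)" using y p13 by (intro divide_left_mono) auto
      finally show ?thesis by simp
    qed
    have e1: "2 * p * sqrt (X * (k * A)) = 4 * (k * A)"
    proof -
      have "sqrt (k * A / X) * sqrt (X * (k * A)) = sqrt ((k * A)\<^sup>2)"
        using Xpos by (simp add: real_sqrt_mult[symmetric] power2_eq_square field_simps)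
      also have "\<dots> = k * A" using kA by simp
      finally have F: "sqrt (k * A / X) * sqrt (X * (k * A)) = k * A" .
      have "2 * p * sqrt (X * (k * A)) = 4 * (sqrt (k * A / X) * sqrt (X * (k * A)))"
        unfolding p_def by (simp only: mult.assoc)
      then show ?thesis unfolding F .
    qed
    have e2: "(X / 2) * (3/2 * p\<^sup>2) = 3 * (k * A)" unfolding p2 using Xpos by (simp add: field_simps)
    have "k * ln 9 - 2 * p * sqrt (X * (k * A)) + (X / 2) * (3/2 * p\<^sup>2) = - (k * L1)"
      unfolding e1 e2 by (simp add: A_eq algebra_simps)
    also have "\<dots> \<le> ln (19/10) - L1" using kL1 ln19nn by linarith
    finally show ?thesis using red[OF p0 p1 hb] p0 p1 by blast
  next
    case 2
    define s where "s = sqrt (X / (k * A))"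
    have XkA: "0 \<le> X / (k * A)" using divide_nonneg_pos[OF X0 kA] .
    have "s\<^sup>2 = X / (k * A)" using XkA by (simp add: s_def)
    moreover have "(k * A) * (X / (k * A)) = X" using kA by (metis less_irrefl nonzero_mult_div_cancel_left times_divide_eq_right)
    ultimately have Xs: "X = (k * A) * s\<^sup>2" by simp
    have s0: "s \<ge> 0" using XkA by (simp add: s_def)
    have e1: "sqrt (X * (k * A)) = (k * A) * s"
    proof -
      have "X * (k * A) = ((k * A) * s)\<^sup>2" unfolding Xs by (simp add: power2_eq_square)
      then show ?thesis using kA s0 by simp
    qed
    have slo: "s \<ge> 7/5"
    proof -
      have "2 \<le> X / (k * A)" using 2 kA by (simp add: field_simps)
      then have "sqrt 2 \<le> s" unfolding s_def by (rule real_sqrt_le_mono)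
      moreover have "7/5 \<le> sqrt (2::real)" by (rule real_le_rsqrt) (simp add: power2_eq_square)
      ultimately show ?thesis by simp
    qed
    have shi: "s \<le> 7/2"
    proof -
      have "X / (k * A) \<le> 12" using 2 kA by (simp add: field_simps)
      then have "s \<le> sqrt 12" unfolding s_def by (rule real_sqrt_le_mono)
      moreover have "sqrt (12::real) \<le> 7/2" by (rule real_sqrt_le_iff'[THEN iffD2]) (auto simp: power2_eq_square)
      ultimately show ?thesis by simp
    qed
    have quad: "s\<^sup>2 / 6 - s \<le> -1"
    proof -
      have "\<bar>s - 3\<bar> \<le> 8/5" using slo shi by (auto simp: abs_if)
      then have "(s - 3)\<^sup>2 \<le> (8/5)\<^sup>2" by (metis abs_ge_zero power2_abs power_mono)
      then show ?thesis by (simp add: power2_eq_square algebra_simps)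
    qed
    have hb: "ln (1 / (1 - (1/2::real)\<^sup>2)) \<le> 1/3" using ln43 by (simp add: power2_eq_square)
    have "k * ln 9 - 2 * (1/2) * sqrt (X * (k * A)) + (X / 2) * (1/3) = k * ln 9 + (k * A) * (s\<^sup>2 / 6 - s)"
    proof -
      have "(X / 2) * (1/3) = (k * A) * s\<^sup>2 / 6" by (subst Xs) simp
      then show ?thesis unfolding e1 by (simp add: algebra_simps)
    qed
    also have "\<dots> \<le> k * ln 9 + (k * A) * (-1)" using quad kA by (intro add_left_mono mult_left_mono) auto
    also have "\<dots> = - (k * L1)" unfolding A_eq by (simp add: algebra_simps)
    also have "\<dots> \<le> ln (19/10) - L1" using kL1 ln19nn by linarith
    finally have E: "k * ln 9 - 2 * (1/2) * sqrt (X * (k * A)) + (X / 2) * (1/3) \<le> ln (19/10) - L1" .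
    have "9 ^ K * exp (- (2 * (1/2) * sqrt (real t * real K * ln (9/d)))) * (1 / sqrt (1 - (1/2)\<^sup>2)) ^ t \<le> 19/10 * d"
      by (rule red[OF _ _ hb E]) auto
    then show ?thesis by (intro exI[of _ "1/2"]) simp
  next
    case 3
    define r where "r = sqrt (X / (2 * (k * A)))"
    have XkA: "0 \<le> X / (2 * (k * A))" using X0 kA by simp
    have r0: "r \<ge> 0" using XkA by (simp add: r_def)
    have r2: "r\<^sup>2 = X / (2 * (k * A))" using XkA by (simp add: r_def)
    have Xr: "X = 2 * (k * A) * r\<^sup>2"
    proof -
      have "2 * (k * A) * (X / (2 * (k * A))) = X" using kA by (metis less_irrefl mult_eq_0_iff nonzero_mult_div_cancel_left times_divide_eq_right zero_neq_numeral)
      then show ?thesis unfolding r2 by simp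
    qed
    have e1: "sqrt (X * (k * A)) = sqrt 2 * (k * A) * r"
    proof -
      have "X * (k * A) = 2 * ((k * A) * r)\<^sup>2" unfolding Xr by (simp add: power2_eq_square algebra_simps)
      then have "sqrt (X * (k * A)) = sqrt 2 * sqrt (((k * A) * r)\<^sup>2)" by (simp add: real_sqrt_mult)
      also have "sqrt (((k * A) * r)\<^sup>2) = (k * A) * r" using kA r0 by simp
      finally show ?thesis by simp
    qed
    have r1: "r \<le> 1"
    proof -
      have "X / (2 * (k * A)) \<le> 1" using 3 kA by simp
      then show ?thesis unfolding r_def by simp
    qed
    define q where "q = L1 / A"
    have q1: "q \<le> 1" using A_eq ln9pos Apos by (simp add: q_def)
    have q29: "2/9 \<le> q"
    proof -
      have "2 * ln (9::real) \<le> 7 * L1" using ln9 L1pos by simp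
      then show ?thesis unfolding q_def using Apos A_eq by (simp add: field_simps)
    qed
    have rq: "sqrt q \<le> r"
    proof -
      have "q \<le> X / (2 * (k * A))"
        unfolding q_def using tX kA Apos k2 by (simp add: field_simps)
      then show ?thesis unfolding r_def by (rule real_sqrt_le_mono)
    qed
    have ln9p: "ln (9::real) > 0" by simp
    define c0 where "c0 = (ln 9 - ln (19/10)) / (2 * ln (9::real))"
    have c0le: "c0 \<le> 15/38"
    proof -
      have "ln (19/10) / (2 * ln 9) \<ge> (9/19) / (2 * (9/4::real))"
        using ln19 ln9 ln9p by (intro frac_le) auto
      moreover have "c0 = 1/2 - ln (19/10) / (2 * ln 9)" unfolding c0_def using ln9p by (simp add: field_simps)
      ultimately show ?thesis by simp
    qed
    have c0ge: "c0 \<ge> 0"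
    proof -
      have "ln (19/10) \<le> ln (9::real)" by simp
      then show ?thesis unfolding c0_def using ln9p by simp
    qed
    define R where "R = - 1/2 - (1 - q) * c0"
    have s2: "sqrt (2::real) \<ge> 11/8" by (rule real_le_rsqrt) (simp add: power2_eq_square)
    have phi: "(11/10) * r\<^sup>2 + (- (8/5) * sqrt 2) * r + (- R) \<le> 0"
    proof (rule convex_quad_le0[OF _ rq r1])
      show "(11/10::real) \<ge> 0" by simp
      show "(11/10) * 1\<^sup>2 + (- (8/5) * sqrt 2) * 1 + (- R) \<le> 0"
      proof -
        have "(1 - q) * c0 \<le> 1 * c0" using q29 c0ge by (intro mult_right_mono) auto
        then show ?thesis unfolding R_def using s2 c0le by simp
      qed
      have gq: "(11/10 - c0) * (sqrt q)\<^sup>2 + (- (8/5) * sqrt 2) * sqrt q + (1/2 + c0) \<le> 0"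
      proof (rule convex_quad_le0)
        show "0 \<le> 11/10 - c0" using c0le by simp
        show "sqrt 2 / 3 \<le> sqrt q"
        proof -
          have "sqrt (2/9) \<le> sqrt q" using q29 by (rule real_sqrt_le_mono)
          moreover have "sqrt (2/9::real) = sqrt 2 / 3" by (simp add: real_sqrt_divide)
          ultimately show ?thesis by simp
        qed
        show "sqrt q \<le> 1" using q1 by simp
        have "(sqrt 2 / 3)\<^sup>2 = (2/9::real)" by (simp add: power_divide)
        moreover have "(- (8/5) * sqrt 2) * (sqrt 2 / 3) = (- 16/15::real)" by simp
        ultimately have "(11/10 - c0) * (sqrt 2 / 3)\<^sup>2 + (- (8/5) * sqrt 2) * (sqrt 2 / 3) + (1/2 + c0)
            = 11/45 - 17/30 + (7/9) * c0" by (simp add: algebra_simps)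
        then show "(11/10 - c0) * (sqrt 2 / 3)\<^sup>2 + (- (8/5) * sqrt 2) * (sqrt 2 / 3) + (1/2 + c0) \<le> 0"
          using c0le by simp
        show "(11/10 - c0) * 1\<^sup>2 + (- (8/5) * sqrt 2) * 1 + (1/2 + c0) \<le> 0" using s2 by simp
      qed
      have "(sqrt q)\<^sup>2 = q" using q29 by simp
      then show "(11/10) * (sqrt q)\<^sup>2 + (- (8/5) * sqrt 2) * sqrt q + (- R) \<le> 0"
        using gq unfolding R_def by (simp add: algebra_simps)
    qed
    have AR: "ln 9 + A * R = (ln (19/10) - L1) / 2"
    proof -
      have "A * (1 - q) = ln 9" unfolding q_def using Apos A_eq by (simp add: field_simps)
      moreover have "A * R = - A / 2 - (A * (1 - q)) * c0" unfolding R_def by (simp add: algebra_simps)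
      ultimately have "A * R = - A / 2 - ln 9 * c0" by simp
      also have "ln 9 * c0 = (ln 9 - ln (19/10)) / 2" unfolding c0_def using ln9p by simp
      finally have "A * R = - A / 2 - (ln 9 - ln (19/10)) / 2" .
      then show ?thesis using A_eq by (simp add: field_simps)
    qed
    have hb: "ln (1 / (1 - (4/5::real)\<^sup>2)) \<le> 11/10" using ln2599 by (simp add: power2_eq_square)
    have "k * ln 9 - 2 * (4/5) * sqrt (X * (k * A)) + (X / 2) * (11/10) = k * (ln 9 + A * ((11/10) * r\<^sup>2 + (- (8/5) * sqrt 2) * r))"
    proof -
      have "(X / 2) * (11/10) = k * A * ((11/10) * r\<^sup>2)" by (subst Xr) simp
      then show ?thesis unfolding e1 by (simp add: algebra_simps)
    qed
    also have "\<dots> \<le> k * (ln 9 + A * R)"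
      using phi Apos k2 by (intro mult_left_mono add_left_mono) auto
    also have "\<dots> = k * ((ln (19/10) - L1) / 2)" unfolding AR ..
    also have "\<dots> \<le> ln (19/10) - L1"
    proof -
      have "ln (19/10) - L1 \<le> 0" using ln19b by simp
      then have "k * ((ln (19/10) - L1) / 2) \<le> 2 * ((ln (19/10) - L1) / 2)"
        using k2 by (intro mult_right_mono_neg) auto
      then show ?thesis by simp
    qed
    finally have E: "k * ln 9 - 2 * (4/5) * sqrt (X * (k * A)) + (X / 2) * (11/10) \<le> ln (19/10) - L1" .
    have "9 ^ K * exp (- (2 * (4/5) * sqrt (real t * real K * ln (9/d)))) * (1 / sqrt (1 - (4/5)\<^sup>2)) ^ t \<le> 19/10 * d"
      by (rule red[OF _ _ hb E]) auto
    then show ?thesis by (intro exI[of _ "4/5"]) simp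
  qed
qed

lemma mu_numeric:
  fixes l n :: nat and d rho :: real
  assumes l: "l \<ge> 1" and n: "n \<ge> 1" and d0: "0 < d" and d1: "d < 1/2"
    and rho: "rho = sqrt (2 * real (l + n)) + sqrt (2 * ln (2/d))"
  shows "real l < rho\<^sup>2" and "exp (-(rho\<^sup>2 - real l)/2) * (rho / sqrt (real l)) ^ l \<le> d/10"
proof -
  define L2 where "L2 = ln (2/d)"
  have L2ge: "4/3 \<le> L2"
  proof -
    have "ln (4::real) \<le> L2" unfolding L2_def using d0 d1 by (subst ln_le_cancel_iff) (auto simp: field_simps)
    moreover have "ln (4::real) = 2 * ln 2" using ln_realpow[of 2 2] by simp
    ultimately show ?thesis using ln2 by simp
  qed
  define a where "a = sqrt (2 * real (l + n))"
  define b where "b = sqrt (2 * L2)"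
  have b0: "b \<ge> 0" and b2: "b\<^sup>2 = 2 * L2" using L2ge by (auto simp: b_def)
  have sl: "sqrt (real l) \<ge> 1" using l by simp
  have a1: "a \<ge> sqrt (real l) + 1"
  proof -
    have "(sqrt (real l) + 1)\<^sup>2 = real l + 2 * sqrt (real l) + 1"
      by (simp add: power2_eq_square algebra_simps)
    also have "\<dots> \<le> 2 * real (l + n)"
    proof -
      have "(sqrt (real l) - 1)\<^sup>2 \<ge> 0" by simp
      then have "2 * sqrt (real l) \<le> real l + 1" by (simp add: power2_eq_square algebra_simps)
      then show ?thesis using n by simp
    qed
    finally show ?thesis unfolding a_def by (rule real_le_rsqrt)
  qed
  have rho': "rho = a + b" by (simp add: rho a_def b_def L2_def)
  have rl: "rho - sqrt (real l) \<ge> 1 + b" using a1 rho' by simp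
  have rpos: "rho > sqrt (real l)" using rl b0 by simp
  show "real l < rho\<^sup>2"
  proof -
    have "sqrt (real l) ^ 2 < rho ^ 2" using rpos by (intro power_strict_mono) auto
    then show ?thesis by simp
  qed
  define Y where "Y = rho / sqrt (real l)"
  have Ypos: "Y > 0" using rpos sl unfolding Y_def by (intro divide_pos_pos) linarith+
  have lnY: "real l * ln Y \<le> sqrt (real l) * rho - real l"
  proof -
    have "ln Y \<le> Y - 1" using Ypos by (rule ln_le_minus_one)
    then have "real l * ln Y \<le> real l * (Y - 1)" by (intro mult_left_mono) auto
    also have "real l * (Y - 1) = sqrt (real l) * rho - real l"
    proof -
      have "real l = sqrt (real l) * sqrt (real l)" by simp
      then show ?thesis unfolding Y_def using sl by (simp add: field_simps)
    qed
    finally show ?thesis .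
  qed
  have key: "-(rho\<^sup>2 - real l)/2 + real l * ln Y \<le> - (rho - sqrt (real l))\<^sup>2 / 2"
  proof -
    have "(rho - sqrt (real l))\<^sup>2 = rho\<^sup>2 - 2 * (sqrt (real l) * rho) + real l"
      by (simp add: power2_eq_square algebra_simps)
    then show ?thesis using lnY by (simp add: field_simps)
  qed
  have "(1 + b)\<^sup>2 \<le> (rho - sqrt (real l))\<^sup>2" using rl b0 by (intro power_mono) auto
  then have "- (rho - sqrt (real l))\<^sup>2 / 2 \<le> - (1 + 2 * b + 2 * L2) / 2"
  proof -
    have "(1 + b)\<^sup>2 = 1 + 2 * b + 2 * L2" using b2 by (simp add: power2_eq_square algebra_simps)
    then show ?thesis using \<open>(1 + b)\<^sup>2 \<le> (rho - sqrt (real l))\<^sup>2\<close> by (smt (verit) divide_right_mono)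
  qed
  also have "\<dots> \<le> ln (d / 10)"
  proof -
    have b15: "b \<ge> 3/2"
    proof -
      have "(3/2)\<^sup>2 \<le> b\<^sup>2" using b2 L2ge by (simp add: power2_eq_square)
      then show ?thesis using b0 by (simp add: power2_le_iff_abs_le)
    qed
    have "ln (d / 10) = ln d - ln 10" using d0 by (simp add: ln_div)
    also have "ln (10::real) = ln 2 + ln 5" using ln_mult[of 2 5] by simp
    also have "ln d = ln 2 - L2" unfolding L2_def using d0 by (simp add: ln_div)
    finally have "ln (d / 10) = - L2 - ln 5" by simp
    then show ?thesis using b15 ln5 by simp
  qed
  finally have ex: "-(rho\<^sup>2 - real l)/2 + real l * ln Y \<le> ln (d / 10)" using key by simp
  have "exp (-(rho\<^sup>2 - real l)/2) * Y ^ l = exp (-(rho\<^sup>2 - real l)/2 + real l * ln Y)"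
    using Ypos by (simp add: exp_add exp_of_nat_mult)
  also have "\<dots> \<le> exp (ln (d / 10))" using ex by simp
  also have "\<dots> = d / 10" using d0 by simp
  finally show "exp (-(rho\<^sup>2 - real l)/2) * (rho / sqrt (real l)) ^ l \<le> d/10" unfolding Y_def .
qed

lemma outer_cont: "continuous_on UNIV (\<lambda>p::(real^'l::finite) \<times> (real^'n::finite). outer (fst p) (snd p))"
proof (rule continuous_at_imp_continuous_on, rule ballI)
  fix p :: "(real^'l) \<times> (real^'n)"
  show "isCont (\<lambda>p::(real^'l) \<times> (real^'n). outer (fst p) (snd p)) p"
    unfolding outer_def isCont_def by (intro tendsto_intros)
qed

lemma outer_measurable[measurable]:
  fixes f :: "'a \<Rightarrow> real^'l::finite" and g :: "'a \<Rightarrow> real^'n::finite"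
  assumes [measurable]: "f \<in> borel_measurable M" "g \<in> borel_measurable M"
  shows "(\<lambda>\<omega>. outer (f \<omega>) (g \<omega>)) \<in> borel_measurable M"
proof -
  have c: "(\<lambda>p::(real^'l) \<times> (real^'n). outer (fst p) (snd p)) \<in> borel_measurable (borel \<Otimes>\<^sub>M borel)"
    using borel_measurable_continuous_onI[OF outer_cont] by (simp add: borel_prod)
  have "(\<lambda>\<omega>. (f \<omega>, g \<omega>)) \<in> measurable M (borel \<Otimes>\<^sub>M borel)" by measurable
  from measurable_compose[OF this c] show ?thesis by simp
qed

lemma spec_norm_lip: "\<bar>spec_norm (A :: real ^ 'n::finite ^ 'l::finite) - spec_norm B\<bar> \<le> norm (A - B)"
proof -
  have "spec_norm A \<le> spec_norm B + spec_norm (A - B)"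
    using spec_norm_triangle[of B "A - B"] by simp
  moreover have "spec_norm B \<le> spec_norm A + spec_norm (B - A)"
    using spec_norm_triangle[of A "B - A"] by simp
  moreover have "spec_norm (A - B) \<le> norm (A - B)" by (rule spec_norm_le_norm)
  moreover have "spec_norm (B - A) \<le> norm (A - B)" using spec_norm_le_norm[of "B - A"] by (simp add: norm_minus_commute)
  ultimately show ?thesis by linarith
qed

lemma spec_norm_cont: "continuous_on UNIV (spec_norm :: real ^ 'n::finite ^ 'l::finite \<Rightarrow> real)"
proof (rule lipschitz_on_continuous_on)
  show "1-lipschitz_on UNIV (spec_norm :: real ^ 'n::finite ^ 'l::finite \<Rightarrow> real)"
    by (rule lipschitz_onI) (auto simp: dist_real_def dist_norm spec_norm_lip)
qed

lemma spec_norm_measurable[measurable]: "(spec_norm :: real ^ 'n::finite ^ 'l::finite \<Rightarrow> real) \<in> borel_measurable borel"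
  by (rule borel_measurable_continuous_onI[OF spec_norm_cont])

lemma outer_diff: "outer e (a - m) + outer e m = outer e a"
  by (simp add: outer_def vec_eq_iff algebra_simps)

lemma norm_sq_vec2: "(norm (v :: 'a::real_inner ^ 'n::finite))\<^sup>2 = (\<Sum>i\<in>UNIV. (norm (v $ i))\<^sup>2)"
  unfolding power2_norm_eq_inner inner_vec_def by simp

lemma normsq_Smu:
  fixes eta :: "nat \<Rightarrow> real ^ 'l::finite" and mu :: "nat \<Rightarrow> real ^ 'n::finite"
  shows "(norm (\<Sum>j\<in>J. outer (eta j) (mu j)))\<^sup>2 = (\<Sum>b\<in>UNIV. (norm (\<Sum>j\<in>J. (mu j $ b) *\<^sub>R eta j))\<^sup>2)"
proof -
  have "(norm (\<Sum>j\<in>J. outer (eta j) (mu j)))\<^sup>2 = (\<Sum>a\<in>UNIV. (norm ((\<Sum>j\<in>J. outer (eta j) (mu j)) $ a))\<^sup>2)"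
    by (rule norm_sq_vec2)
  also have "\<dots> = (\<Sum>a\<in>UNIV. \<Sum>b\<in>UNIV. ((\<Sum>j\<in>J. outer (eta j) (mu j)) $ a $ b)\<^sup>2)"
    by (simp add: norm_sq_vec)
  also have "\<dots> = (\<Sum>b\<in>UNIV. \<Sum>a\<in>UNIV. ((\<Sum>j\<in>J. (mu j $ b) *\<^sub>R eta j) $ a)\<^sup>2)"
    by (subst sum.swap) (simp add: outer_def sum_component ac_simps)
  also have "\<dots> = (\<Sum>b\<in>UNIV. (norm (\<Sum>j\<in>J. (mu j $ b) *\<^sub>R eta j))\<^sup>2)"
    by (simp add: norm_sq_vec)
  finally show ?thesis .
qed

theorem lemma5:
  fixes M :: "'a measure"
    and x :: "nat \<Rightarrow> 'a \<Rightarrow> real ^ 'n"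
    and eta :: "nat \<Rightarrow> 'a \<Rightarrow> real ^ 'l"
    and mu :: "nat \<Rightarrow> real ^ 'n"
    and sx se muhat delta :: real
    and t :: nat
  assumes "prob_space M"
    and "sx > 0" and "se > 0" and "muhat \<ge> 0"
    and "\<And>j. norm (mu j) \<le> muhat"
    and "\<And>j. distributed M lborel (x j) (\<lambda>v. ennreal (iso_gauss_density TYPE('n) (mu j) sx v))"
    and "\<And>j. distributed M lborel (eta j) (\<lambda>v. ennreal (iso_gauss_density TYPE('l) 0 se v))"
    and "prob_space.indep_vars M (\<lambda>_. borel)
           (\<lambda>i \<omega>. case i of Inl j \<Rightarrow> (x j \<omega>, 0) | Inr j \<Rightarrow> (0, eta j \<omega>))
           (UNIV :: (nat + nat) set)"
    and "delta > 0"
    and "real t \<ge> 2 * real (CARD('n) + CARD('l)) * ln (1 / delta)"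
  shows "measure M {\<omega> \<in> space M.
            spec_norm (\<Sum>j = 1..t. outer (eta j \<omega>) (x j \<omega>))
            \<le> sqrt (real t) * se *
               (4 * sx * sqrt (real (CARD('n) + CARD('l)) * ln (9 / delta))
                + muhat * (sqrt (2 * real (CARD('l) + CARD('n))) + sqrt (2 * ln (2 / delta))))}
         \<ge> 1 - 2 * delta"
proof -
  interpret P: prob_space M by (rule assms(1))
  note sx = assms(2) and se = assms(3) and mh = assms(4) and munorm = assms(5)
    and dx = assms(6) and de = assms(7) and ind = assms(8) and d0 = assms(9) and tge = assms(10)
  have [measurable]: "\<And>j. x j \<in> borel_measurable M" using distributed_measurable[OF dx] by simp
  have [measurable]: "\<And>j. eta j \<in> borel_measurable M" using distributed_measurable[OF de] by simp
  define Bnd where "Bnd = sqrt (real t) * se *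
               (4 * sx * sqrt (real (CARD('n) + CARD('l)) * ln (9 / delta))
                + muhat * (sqrt (2 * real (CARD('l) + CARD('n))) + sqrt (2 * ln (2 / delta))))"
  define Good where "Good = {\<omega> \<in> space M. spec_norm (\<Sum>j = 1..t. outer (eta j \<omega>) (x j \<omega>)) \<le> Bnd}"
  have Good_sets: "Good \<in> sets M" unfolding Good_def by measurable
  have "measure M Good \<ge> 1 - 2 * delta"
  proof (cases "delta \<ge> 1/2")
    case True
    then show ?thesis using measure_nonneg[of M Good] by linarith
  next
    case False
    then have d1: "delta < 1/2" by simp
    define n where "n = CARD('n)"
    define l where "l = CARD('l)"
    define K where "K = n + l"
    have n1: "n \<ge> 1" and l1: "l \<ge> 1" by (simp_all add: n_def l_def)
    have K2: "K \<ge> 2" using n1 l1 by (simp add: K_def)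
    have L1pos: "ln (1 / delta) > 0" using d0 d1 by simp
    have tK: "real t \<ge> 2 * real K * ln (1 / delta)" using tge by (simp add: K_def n_def l_def)
    have tpos: "t \<ge> 1"
    proof -
      have "0 < 2 * real K * ln (1 / delta)" using K2 L1pos by simp
      then show ?thesis using tK by linarith
    qed
    define J where "J = {1..t}"
    have finJ: "finite J" and cardJ: "card J = t" by (simp_all add: J_def)
    obtain p where p0: "0 \<le> p" and p1: "p < 1"
      and pb: "9 ^ K * exp (- (2 * p * sqrt (real t * real K * ln (9/delta)))) * (1 / sqrt (1 - p\<^sup>2)) ^ t \<le> 19/10 * delta"
      using alpha_numeric[OF K2 d0 d1 tK] by blast
    obtain Nl :: "(real^'l) set" where Nl: "Nl \<subseteq> {v. norm v = 1}" "finite Nl" "real (card Nl) \<le> (1 + 2 / (1/4)) ^ CARD('l)"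
        "\<forall>v. norm v = 1 \<longrightarrow> (\<exists>w\<in>Nl. norm (v - w) \<le> 1/4)"
      using net_exists[of "1/4"] by auto
    obtain Nn :: "(real^'n) set" where Nn: "Nn \<subseteq> {v. norm v = 1}" "finite Nn" "real (card Nn) \<le> (1 + 2 / (1/4)) ^ CARD('n)"
        "\<forall>v. norm v = 1 \<longrightarrow> (\<exists>w\<in>Nn. norm (v - w) \<le> 1/4)"
      using net_exists[of "1/4"] by auto
    define A where "A = ln (9 / delta)"
    define B1 where "B1 = sqrt (real t) * se * (4 * sx * sqrt (real K * A))"
    define rho where "rho = sqrt (2 * real (l + n)) + sqrt (2 * ln (2 / delta))"
    define B2 where "B2 = sqrt (real t) * se * (muhat * rho)"
    have Bnd_eq: "Bnd = B1 + B2"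
      unfolding Bnd_def B1_def B2_def rho_def A_def K_def n_def l_def by (simp add: algebra_simps)
    have B2nn: "B2 \<ge> 0"
    proof -
      have "rho \<ge> 0" using d0 d1 by (simp add: rho_def)
      then show ?thesis using se mh by (simp add: B2_def)
    qed
    define Z where "Z u v \<omega> = (\<Sum>j\<in>J. inner u (eta j \<omega>) * inner v (x j \<omega> - mu j))" for u :: "real^'l" and v :: "real^'n" and \<omega>
    define Q where "Q \<omega> = (\<Sum>b\<in>UNIV. (norm (\<Sum>j\<in>J. (mu j $ b) *\<^sub>R eta j \<omega>))\<^sup>2)" for \<omega>
    define Ab where "Ab uv = {\<omega>\<in>space M. Z (fst uv) (snd uv) \<omega> \<ge> B1 / 2}" for uv
    define E1 where "E1 = (\<Union>uv\<in>Nl \<times> Nn. Ab uv)"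
    define E2 where "E2 = {\<omega>\<in>space M. Q \<omega> > B2\<^sup>2}"
    have Ab_sets: "\<And>uv. Ab uv \<in> sets M" unfolding Ab_def Z_def by measurable
    have E1_sets: "E1 \<in> sets M" unfolding E1_def using Ab_sets Nl(2) Nn(2) by auto
    have E2_sets: "E2 \<in> sets M" unfolding E2_def Q_def by measurable
    have incl: "space M - (E1 \<union> E2) \<subseteq> Good"
    proof
      fix \<omega> assume w: "\<omega> \<in> space M - (E1 \<union> E2)"
      then have wsp: "\<omega> \<in> space M" by simp
      have Zlt: "\<And>u v. u \<in> Nl \<Longrightarrow> v \<in> Nn \<Longrightarrow> Z u v \<omega> \<le> B1 / 2"
      proof -
        fix u v assume "u \<in> Nl" "v \<in> Nn"
        then have "\<omega> \<notin> Ab (u, v)" using w unfolding E1_def by blast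
        then show "Z u v \<omega> \<le> B1 / 2" using wsp unfolding Ab_def by auto
      qed
      have Qle: "Q \<omega> \<le> B2\<^sup>2" using w wsp unfolding E2_def by auto
      define S0 where "S0 = (\<Sum>j\<in>J. outer (eta j \<omega>) (x j \<omega> - mu j))"
      define Sm where "Sm = (\<Sum>j\<in>J. outer (eta j \<omega>) (mu j))"
      have Sdec: "(\<Sum>j = 1..t. outer (eta j \<omega>) (x j \<omega>)) = S0 + Sm"
        unfolding S0_def Sm_def J_def sum.distrib[symmetric] outer_diff ..
      have s0: "spec_norm S0 \<le> 2 * (B1 / 2)"
      proof (rule spec_norm_net)
        show "\<And>u. norm u = 1 \<Longrightarrow> \<exists>w\<in>Nl. norm (u - w) \<le> 1/4" using Nl(4) by blast
        show "\<And>w. w \<in> Nl \<Longrightarrow> norm w = 1" using Nl(1) by blast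
        show "\<And>v. norm v = 1 \<Longrightarrow> \<exists>w\<in>Nn. norm (v - w) \<le> 1/4" using Nn(4) by blast
        fix u v assume uv: "u \<in> Nl" "v \<in> Nn"
        have "inner u (S0 *v v) = Z u v \<omega>"
          unfolding S0_def Z_def sum_mat_vec[OF finJ] inner_sum_right outer_mult
          by (simp add: inner_commute)
        then show "inner u (S0 *v v) \<le> B1 / 2" using Zlt[OF uv] by simp
      qed
      have sm: "spec_norm Sm \<le> B2"
      proof -
        have "spec_norm Sm \<le> norm Sm" by (rule spec_norm_le_norm)
        also have "norm Sm = sqrt (Q \<omega>)"
          unfolding Sm_def Q_def normsq_Smu[symmetric] by simp
        also have "sqrt (Q \<omega>) \<le> sqrt (B2\<^sup>2)" using Qle by (rule real_sqrt_le_mono)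
        also have "\<dots> = B2" using B2nn by simp
        finally show ?thesis .
      qed
      have "spec_norm (\<Sum>j = 1..t. outer (eta j \<omega>) (x j \<omega>)) \<le> Bnd"
        unfolding Sdec Bnd_eq using spec_norm_triangle[of S0 Sm] s0 sm by simp
      then show "\<omega> \<in> Good" unfolding Good_def using wsp by simp
    qed
    have mE1: "measure M E1 \<le> 19/10 * delta"
    proof -
      define lam where "lam = p / (sx * se)"
      have lam0: "lam \<ge> 0" using p0 sx se by (simp add: lam_def)
      have lam2: "lam\<^sup>2 * sx\<^sup>2 * se\<^sup>2 = p\<^sup>2" using sx se by (simp add: lam_def power_divide power_mult_distrib)
      have p21: "p\<^sup>2 < 1"
      proof -
        have "p\<^sup>2 < 1\<^sup>2" using p0 p1 by (intro power_strict_mono) auto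
        then show ?thesis by simp
      qed
      define bnd where "bnd = exp (- lam * (B1 / 2)) * (1 / sqrt (1 - p\<^sup>2)) ^ t"
      have bnd0: "bnd \<ge> 0" using p21 by (simp add: bnd_def)
      have each: "\<And>uv. uv \<in> Nl \<times> Nn \<Longrightarrow> measure M (Ab uv) \<le> bnd"
      proof -
        fix uv assume uv: "uv \<in> Nl \<times> Nn"
        have u1: "norm (fst uv) = 1" using uv Nl(1) by auto
        have v1: "norm (snd uv) = 1" using uv Nn(1) by auto
        have "emeasure M (Ab uv) \<le> ennreal (exp (- lam * (B1 / 2)) * (1 / sqrt (1 - lam\<^sup>2 * sx\<^sup>2 * se\<^sup>2)) ^ card J)"
          unfolding Ab_def Z_def
          by (rule P.tail_alpha[OF ind dx de sx se u1 v1 lam0 _ finJ]) (use lam2 p21 in simp)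
        then have "emeasure M (Ab uv) \<le> ennreal bnd" unfolding lam2 cardJ bnd_def .
        then show "measure M (Ab uv) \<le> bnd"
          using bnd0 by (simp add: P.emeasure_eq_measure)
      qed
      have "measure M E1 \<le> (\<Sum>uv\<in>Nl \<times> Nn. measure M (Ab uv))"
        unfolding E1_def using Nl(2) Nn(2) Ab_sets by (intro P.finite_measure_subadditive_finite) auto
      also have "\<dots> \<le> (\<Sum>uv\<in>Nl \<times> Nn. bnd)" by (rule sum_mono) (rule each)
      also have "\<dots> = real (card Nl) * real (card Nn) * bnd" by (simp add: card_cartesian_product)
      also have "\<dots> \<le> 9 ^ l * 9 ^ n * bnd"
        using Nl(3) Nn(3) bnd0 by (intro mult_right_mono mult_mono) (auto simp: l_def n_def)
      also have "9 ^ l * 9 ^ n * bnd = 9 ^ K * exp (- (2 * p * sqrt (real t * real K * ln (9/delta)))) * (1 / sqrt (1 - p\<^sup>2)) ^ t"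
      proof -
        have "lam * (B1 / 2) = 2 * p * sqrt (real t * real K * ln (9/delta))"
          using sx se unfolding lam_def B1_def A_def by (simp add: real_sqrt_mult field_simps)
        then show ?thesis unfolding bnd_def K_def by (simp add: power_add)
      qed
      also have "\<dots> \<le> 19/10 * delta" by (rule pb)
      finally show ?thesis .
    qed
    have mE2: "measure M E2 \<le> delta / 10"
    proof (cases "muhat = 0")
      case True
      then have "\<And>j. mu j = 0" using munorm by (metis norm_le_zero_iff)
      then have "E2 = {}" unfolding E2_def Q_def B2_def using True by simp
      then show ?thesis using d0 by simp
    next
      case False
      then have mpos: "muhat > 0" using mh by simp
      define Tb where "Tb = real t * se\<^sup>2 * muhat\<^sup>2"
      have Tbpos: "Tb > 0" using tpos se mpos by (simp add: Tb_def)
      have rl: "real l < rho\<^sup>2" and rb: "exp (-(rho\<^sup>2 - real l)/2) * (rho / sqrt (real l)) ^ l \<le> delta/10"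
        using mu_numeric[OF l1 n1 d0 d1 rho_def] by auto
      have rho2pos: "rho\<^sup>2 > 0" using rl l1 by linarith
      define th where "th = (1 - real l / rho\<^sup>2) / (2 * Tb)"
      have th0: "th \<ge> 0" using rl rho2pos Tbpos by (simp add: th_def field_simps)
      have thT: "2 * th * Tb = 1 - real l / rho\<^sup>2" using Tbpos by (simp add: th_def)
      have thT1: "2 * th * Tb < 1" unfolding thT using l1 rho2pos by simp
      have TbJ: "se\<^sup>2 * (\<Sum>j\<in>J. (norm (mu j))\<^sup>2) \<le> Tb"
      proof -
        have "(\<Sum>j\<in>J. (norm (mu j))\<^sup>2) \<le> (\<Sum>j\<in>J. muhat\<^sup>2)"
          by (intro sum_mono power_mono munorm) simp
        also have "\<dots> = real t * muhat\<^sup>2" using cardJ by simp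
        finally show ?thesis unfolding Tb_def using se by (simp add: mult_left_mono ac_simps)
      qed
      have Qm[measurable]: "Q \<in> borel_measurable M" unfolding Q_def by measurable
      have "emeasure M E2 \<le> emeasure M {\<omega>\<in>space M. Q \<omega> \<ge> B2\<^sup>2}"
        unfolding E2_def by (rule emeasure_mono) auto
      also have "\<dots> \<le> ennreal (exp (- th * B2\<^sup>2)) * (\<integral>\<^sup>+\<omega>. ennreal (exp (th * Q \<omega>)) \<partial>M)"
        by (rule P.chernoff_nn[OF Qm th0])
      also have "\<dots> \<le> ennreal (exp (- th * B2\<^sup>2)) * ennreal ((1 / sqrt (1 - 2 * th * Tb)) ^ CARD('l))"
        unfolding Q_def by (intro mult_left_mono P.mgf_Q[OF ind de se finJ th0 TbJ thT1]) simp
      also have "\<dots> = ennreal (exp (-(rho\<^sup>2 - real l)/2) * (rho / sqrt (real l)) ^ l)"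
      proof -
        have A1: "th * B2\<^sup>2 = (rho\<^sup>2 - real l) / 2"
        proof -
          have "B2\<^sup>2 = Tb * rho\<^sup>2" unfolding B2_def Tb_def by (simp add: power_mult_distrib)
          then show ?thesis unfolding th_def using Tbpos rho2pos by (simp add: field_simps)
        qed
        have A2: "1 / sqrt (1 - 2 * th * Tb) = rho / sqrt (real l)"
        proof -
          have "1 - 2 * th * Tb = real l / rho\<^sup>2" unfolding thT by simp
          moreover have "rho > 0"
          proof -
            have "rho \<ge> 0" using d0 d1 by (simp add: rho_def)
            then show ?thesis using rho2pos by (cases "rho = 0") auto
          qed
          ultimately show ?thesis by (simp add: real_sqrt_divide)
        qed
        have e1: "- th * B2\<^sup>2 = -(rho\<^sup>2 - real l)/2" using A1 by simp
        show ?thesis unfolding e1 A2 by (simp add: ennreal_mult'[symmetric] l_def)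
      qed
      also have "\<dots> \<le> ennreal (delta / 10)" using rb by (rule ennreal_leI)
      finally show ?thesis using d0 by (simp add: P.emeasure_eq_measure)
    qed
    have "measure M (space M - (E1 \<union> E2)) = 1 - measure M (E1 \<union> E2)"
      using E1_sets E2_sets by (intro P.prob_compl) auto
    moreover have "measure M (E1 \<union> E2) \<le> measure M E1 + measure M E2"
      using E1_sets E2_sets by (rule measure_Un_le)
    moreover have "measure M (space M - (E1 \<union> E2)) \<le> measure M Good"
      using incl Good_sets by (rule P.finite_measure_mono)
    ultimately show ?thesis using mE1 mE2 by linarith
  qed
  then show ?thesis unfolding Good_def Bnd_def .
qed

end
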